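(* Let $E$ be a Borel space and $Q$ a semi-Markov kernel on $\mathbb{R}_+\times E$ given $E$, let $c,g:E\to[0,\infty)$ be bounded measurable functions, fix $T\in\mathbb{R}_+$, and suppose $\beta:=\sup_{x\in E}Q(T,E\mid x)<1$. For $\varepsilon>0$ let $$N_\varepsilon=\Big\lceil\frac{\log(\varepsilon(1-\beta))-\log(M+1)}{\log\beta}\Big\rceil,\qquad M=T\|c\|+\|g\|,$$ let $V^*_{N_\varepsilon}$ be the $N_\varepsilon$-th iterate defined by $V^*_0\equiv0$ and $V^*_{n+1}=\mathbb{G}V^*_n$ on $[0,T]\times E$, and let $D^\varepsilon=\{(s,x)\in(0,T]\times E: g(x)=\mathbb{G}V^*_{N_\varepsilon}(s,x)\}$. Then: (a) the map defined for $\omega=(x_0,t_1,x_1,\dots)\in\Omega$ by $$\tau^\varepsilon(\omega)=\inf\Big\{n\in\mathbb{N}: \Big(T-\sum_{k=1}^n t_k,x_n\Big)\in D^\varepsilon\Big\}\wedge\inf\Big\{n\in\mathbb{N}: T\le\sum_{k=1}^n t_k\Big\}$$ is an $\varepsilon$-$T$-optimal stopping time, i.e. $V^{\tau^\varepsilon}(T,x)-V^*(T,x)\le\varepsilon$ for all $x\in E$; (b) if moreover $\inf_{(s,x)\in((0,T]\times E)\setminus D^\varepsilon}\big(g(x)-\mathbb{G}V^*_{N_\varepsilon}(s,x)\big)>\varepsilon$, then $\tau^\varepsilon$ is also a $T$-optimal stopping time, i.e. $V^{\tau^\varepsilon}(T,x)=V^*(T,x)$ for all $x\in E$.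
   Context: $\|f\|=\sup_{x\in C}|f(x)|$ for a function $f$ on a set $C$; $\lceil y\rceil=\min\{n\in\mathbb{N}:n\ge y\}$, $\mathbb{N}=\{0,1,2,\dots\}$; $\inf\emptyset=+\infty$. Semi-Markov kernel: for each $B\in\mathcal{B}(E)$ and $x\in E$, $t\mapsto Q(t,B\mid x)$ is nondecreasing, right-continuous on $\mathbb{R}_+$ with $Q(0,B\mid x)=0$; for each $t$, $Q(t,\cdot\mid\cdot)$ is a substochastic kernel on $E$; $\lim_{t\to\infty}Q(t,\cdot\mid\cdot)$ is a stochastic kernel on $E$. Let $\Omega=\{(x_0,t_1,x_1,t_2,x_2,\dots): x_0\in E,\ (t_n,x_n)\in\mathbb{R}_+\times E\}$ with its product Borel $\sigma$-algebra; $X_n(\omega)=x_n$, $T_0=0$, $T_{n+1}(\omega)=t_{n+1}$, $S_n=\sum_{k=0}^n T_k$, $Y_n=(X_0,T_1,X_1,\dots,T_n,X_n)$, $\mathcal{F}_n=\sigma(T_0,X_0,\dots,T_n,X_n)$. For $x\in E$, $\mathbb{P}_x$ is the unique probability measure on $\Omega$ with $\mathbb{P}_x(T_0=0,X_0=x)=1$ and $\mathbb{P}_x(T_{n+1}\le t,X_{n+1}\in B\mid Y_n)=Q(t,B\mid X_n)$; $\mathbb{E}_x$ its expectation. $X(t)=X_n$ for $S_n\le t<S_{n+1}$. A stopping time is $\tau:\Omega\to\mathbb{N}\cup\{+\infty\}$ with $\{\tau=n\}\in\mathcal{F}_n$ for all $n$; $\Gamma$ is the set of stopping times. For $s\in\mathbb{R}_+$,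 $\tau\in\Gamma$: $R^s_\tau=\int_0^{S_\tau}c(X(t))\,dt+g(X(S_\tau))$ if $S_\tau<s$, and $R^s_\tau=\int_0^s c(X(t))\,dt$ if $S_\tau\ge s$ (with $S_\tau=\lim_nS_n$ on $\{\tau=\infty\}$); $V^\tau(s,x)=\mathbb{E}_x[R^s_\tau]$, $V^*(s,x)=\inf_{\tau\in\Gamma}V^\tau(s,x)$. For Borel $u:[0,T]\times E\to[0,\infty]$, $\mathbb{G}u(s,x)=\min\Big\{c(x)\int_0^s(1-Q(t,E\mid x))\,dt+\int_E\int_{[0,s]}u(s-t,y)\,Q(dt,dy\mid x),\ g(x)\Big\}$. *)

theory Defs
  imports "HOL-Probability.Probability"
begin

(* State space E: the type 'e (a Polish space with its Borel sigma-algebra).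
   Time/state pairs (t,y) live in R_+ x E, with measurable structure Mstep. *)

definition Mstep :: "(real \<times> 'e::polish_space) measure" where
  "Mstep = restrict_space borel ({0..} \<times> UNIV)"

(* A semi-Markov kernel on R_+ x E given E: a stochastic kernel K from E to R_+ x E
   with no mass at time 0; Q(t,B|x) = K x ([0,t] x B). *)
definition semi_markov_kernel :: "('e::polish_space \<Rightarrow> (real \<times> 'e) measure) \<Rightarrow> bool" where
  "semi_markov_kernel K \<longleftrightarrow> K \<in> borel \<rightarrow>\<^sub>M prob_algebra Mstep \<and>
     (\<forall>x. emeasure (K x) ({0} \<times> UNIV) = 0)"

definition Qk :: "('e::polish_space \<Rightarrow> (real \<times> 'e) measure) \<Rightarrow> real \<Rightarrow> 'e set \<Rightarrow> 'e \<Rightarrow> real" where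
  "Qk K t B x = measure (K x) ({0..t} \<times> B)"

(* Canonical space Omega = E x (R_+ x E)^N; omega = (x0, s) with s n = (t_{n+1}, x_{n+1}). *)
type_synonym 'e omega = "'e \<times> (nat \<Rightarrow> real \<times> 'e)"

definition Omega :: "'e::polish_space omega measure" where
  "Omega = (borel :: 'e measure) \<Otimes>\<^sub>M (\<Pi>\<^sub>M n\<in>(UNIV::nat set). Mstep)"

definition Xn :: "'e::polish_space omega \<Rightarrow> nat \<Rightarrow> 'e" where
  "Xn \<omega> n = (if n = 0 then fst \<omega> else snd (snd \<omega> (n - 1)))"

definition Tn :: "'e::polish_space omega \<Rightarrow> nat \<Rightarrow> real" where
  "Tn \<omega> n = (if n = 0 then 0 else fst (snd \<omega> (n - 1)))"

definition Sn :: "'e::polish_space omega \<Rightarrow> nat \<Rightarrow> real" where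
  "Sn \<omega> n = (\<Sum>k\<le>n. Tn \<omega> k)"

definition Yn :: "nat \<Rightarrow> 'e::polish_space omega \<Rightarrow> 'e \<times> (nat \<Rightarrow> real \<times> 'e)" where
  "Yn n \<omega> = (fst \<omega>, restrict (snd \<omega>) {..<n})"

definition Fn :: "nat \<Rightarrow> 'e::polish_space omega measure" where
  "Fn n = vimage_algebra (space Omega) (Yn n)
            ((borel :: 'e measure) \<Otimes>\<^sub>M (\<Pi>\<^sub>M k\<in>{..<n}. Mstep))"

definition is_stopping_time :: "('e::polish_space omega \<Rightarrow> enat) \<Rightarrow> bool" where
  "is_stopping_time \<tau> \<longleftrightarrow> (\<forall>n::nat. {\<omega> \<in> space Omega. \<tau> \<omega> = enat n} \<in> sets (Fn n))"

(* P is the law P_x of the embedded Markov renewal process started at x *)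
definition path_measure :: "('e::polish_space \<Rightarrow> (real \<times> 'e) measure) \<Rightarrow> 'e \<Rightarrow> 'e omega measure \<Rightarrow> bool" where
  "path_measure K x P \<longleftrightarrow> prob_space P \<and> sets P = sets Omega \<and>
     measure P {\<omega> \<in> space Omega. Xn \<omega> 0 = x} = 1 \<and>
     (\<forall>n. \<forall>A \<in> sets (Fn n). \<forall>t \<ge> 0. \<forall>B \<in> sets (borel :: 'e measure).
        measure P {\<omega> \<in> A. Tn \<omega> (Suc n) \<le> t \<and> Xn \<omega> (Suc n) \<in> B}
          = (\<integral>\<omega>. indicator A \<omega> * Qk K t B (Xn \<omega> n) \<partial>P))"

definition Sinf :: "'e::polish_space omega \<Rightarrow> ereal" where
  "Sinf \<omega> = (SUP n. ereal (Sn \<omega> n))"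

definition Stau :: "('e::polish_space omega \<Rightarrow> enat) \<Rightarrow> 'e omega \<Rightarrow> ereal" where
  "Stau \<tau> \<omega> = (case \<tau> \<omega> of enat n \<Rightarrow> ereal (Sn \<omega> n) | \<infinity> \<Rightarrow> Sinf \<omega>)"

(* X(t) = X_n for S_n <= t < S_{n+1}  (unspecified when t >= S_infinity) *)
definition Xt :: "'e::polish_space omega \<Rightarrow> real \<Rightarrow> 'e" where
  "Xt \<omega> t = Xn \<omega> (LEAST n. t < Sn \<omega> (Suc n))"

definition Rcost :: "('e::polish_space \<Rightarrow> real) \<Rightarrow> ('e \<Rightarrow> real) \<Rightarrow> real \<Rightarrow> ('e omega \<Rightarrow> enat) \<Rightarrow> 'e omega \<Rightarrow> real" where
  "Rcost c g s \<tau> \<omega> =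
     (if Stau \<tau> \<omega> < ereal s
      then (LINT t:{0..real_of_ereal (Stau \<tau> \<omega>)}|lborel. c (Xt \<omega> t)) + g (Xt \<omega> (real_of_ereal (Stau \<tau> \<omega>)))
      else (LINT t:{0..s}|lborel. c (Xt \<omega> t)))"

definition Vtau :: "('e::polish_space \<Rightarrow> 'e omega measure) \<Rightarrow> ('e \<Rightarrow> real) \<Rightarrow> ('e \<Rightarrow> real) \<Rightarrow> ('e omega \<Rightarrow> enat) \<Rightarrow> real \<Rightarrow> 'e \<Rightarrow> real" where
  "Vtau P c g \<tau> s x = (\<integral>\<omega>. Rcost c g s \<tau> \<omega> \<partial>P x)"

definition Vstar :: "('e::polish_space \<Rightarrow> 'e omega measure) \<Rightarrow> ('e \<Rightarrow> real) \<Rightarrow> ('e \<Rightarrow> real) \<Rightarrow> real \<Rightarrow> 'e \<Rightarrow> real" where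
  "Vstar P c g s x = (INF \<tau> \<in> {\<tau>. is_stopping_time \<tau>}. Vtau P c g \<tau> s x)"

definition Gop :: "('e::polish_space \<Rightarrow> (real \<times> 'e) measure) \<Rightarrow> ('e \<Rightarrow> real) \<Rightarrow> ('e \<Rightarrow> real)
                    \<Rightarrow> (real \<Rightarrow> 'e \<Rightarrow> real) \<Rightarrow> real \<Rightarrow> 'e \<Rightarrow> real" where
  "Gop K c g u s x = min
     (c x * (LINT t:{0..s}|lborel. 1 - Qk K t UNIV x)
       + (\<integral>p. indicator ({0..s} \<times> UNIV) p * u (s - fst p) (snd p) \<partial>K x))
     (g x)"

definition Vn :: "('e::polish_space \<Rightarrow> (real \<times> 'e) measure) \<Rightarrow> ('e \<Rightarrow> real) \<Rightarrow> ('e \<Rightarrow> real) \<Rightarrow> nat \<Rightarrow> real \<Rightarrow> 'e \<Rightarrow> real" where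
  "Vn K c g n = (Gop K c g ^^ n) (\<lambda>_ _. 0)"

definition supnorm :: "('e::polish_space \<Rightarrow> real) \<Rightarrow> real" where
  "supnorm f = (SUP x. \<bar>f x\<bar>)"

definition betaQ :: "('e::polish_space \<Rightarrow> (real \<times> 'e) measure) \<Rightarrow> real \<Rightarrow> real" where
  "betaQ K T = (SUP x. Qk K T UNIV x)"

(* N_eps = ceil((log(eps(1-beta)) - log(M+1)) / log beta), M = T||c|| + ||g||;
   when beta = 0 (log beta = -infinity) the quotient is 0, so N_eps = 0 *)
definition Neps :: "('e::polish_space \<Rightarrow> (real \<times> 'e) measure) \<Rightarrow> ('e \<Rightarrow> real) \<Rightarrow> ('e \<Rightarrow> real) \<Rightarrow> real \<Rightarrow> real \<Rightarrow> nat" where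
  "Neps K c g T \<epsilon> =
     (let \<beta> = betaQ K T; M = T * supnorm c + supnorm g in
      if \<beta> = 0 then 0
      else nat \<lceil>(ln (\<epsilon> * (1 - \<beta>)) - ln (M + 1)) / ln \<beta>\<rceil>)"

definition Deps :: "('e::polish_space \<Rightarrow> (real \<times> 'e) measure) \<Rightarrow> ('e \<Rightarrow> real) \<Rightarrow> ('e \<Rightarrow> real) \<Rightarrow> real \<Rightarrow> real \<Rightarrow> (real \<times> 'e) set" where
  "Deps K c g T \<epsilon> = {(s, x). s \<in> {0<..T} \<and>
       g x = Gop K c g (Vn K c g (Neps K c g T \<epsilon>)) s x}"

definition tau_eps :: "('e::polish_space \<Rightarrow> (real \<times> 'e) measure) \<Rightarrow> ('e \<Rightarrow> real) \<Rightarrow> ('e \<Rightarrow> real) \<Rightarrow> real \<Rightarrow> real \<Rightarrow> 'e omega \<Rightarrow> enat" where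
  "tau_eps K c g T \<epsilon> \<omega> =
     min (Inf (enat ` {n. (T - Sn \<omega> n, Xn \<omega> n) \<in> Deps K c g T \<epsilon>}))
         (Inf (enat ` {n. T \<le> Sn \<omega> n}))"

end

theory Submission
  imports Defs
begin

lemma space_Mstep: "space Mstep = {0..} \<times> UNIV"
  by (simp add: Mstep_def space_restrict_space)

lemma sets_Mstep: "sets Mstep = {S \<inter> ({0..} \<times> UNIV) | S. S \<in> sets borel}"
  by (auto simp: Mstep_def sets_restrict_space)

lemma space_Omega: "space Omega = UNIV \<times> (UNIV \<rightarrow>\<^sub>E ({0..} \<times> UNIV))"
  by (simp add: Omega_def space_pair_measure space_PiM space_Mstep PiE_def)

context
  fixes K :: "'e::polish_space \<Rightarrow> (real \<times> 'e) measure"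
  assumes K: "semi_markov_kernel K"
begin

lemma K_meas: "K \<in> borel \<rightarrow>\<^sub>M subprob_algebra Mstep"
  using K unfolding semi_markov_kernel_def by (auto intro: measurable_prob_algebraD)

lemma K_prob: "prob_space (K x)" and K_sets: "sets (K x) = sets Mstep"
  using K measurable_space[of K borel "prob_algebra Mstep" x]
  unfolding semi_markov_kernel_def by (auto simp: space_prob_algebra)

lemma K_space: "space (K x) = {0..} \<times> UNIV"
  using sets_eq_imp_space_eq[OF K_sets[of x]] by (simp add: space_Mstep)

lemma K_zero: "emeasure (K x) ({0} \<times> UNIV) = 0"
  using K unfolding semi_markov_kernel_def by auto

end

lemma meas_snd_omega[measurable]: "(\<lambda>\<omega>. snd \<omega> m) \<in> Omega \<rightarrow>\<^sub>M Mstep"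
  unfolding Omega_def by measurable

lemma meas_fst_omega[measurable]: "(\<lambda>\<omega>. fst \<omega>) \<in> Omega \<rightarrow>\<^sub>M borel"
  unfolding Omega_def by measurable

lemma meas_Mstep_fst[measurable]: "fst \<in> Mstep \<rightarrow>\<^sub>M borel"
  unfolding Mstep_def by (rule measurable_restrict_space1) (simp add: borel_prod[symmetric])

lemma meas_Mstep_snd[measurable]: "snd \<in> Mstep \<rightarrow>\<^sub>M borel"
  unfolding Mstep_def by (rule measurable_restrict_space1) (simp add: borel_prod[symmetric])

lemma meas_Xn[measurable]: "(\<lambda>\<omega>. Xn \<omega> n) \<in> Omega \<rightarrow>\<^sub>M borel"
  unfolding Xn_def by (cases "n = 0") simp_all

lemma meas_Tn[measurable]: "(\<lambda>\<omega>. Tn \<omega> n) \<in> Omega \<rightarrow>\<^sub>M borel"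
  unfolding Tn_def by (cases "n = 0") simp_all

lemma meas_Sn[measurable]: "(\<lambda>\<omega>. Sn \<omega> n) \<in> Omega \<rightarrow>\<^sub>M borel"
  unfolding Sn_def by measurable

definition Ysp :: "nat \<Rightarrow> ('e::polish_space \<times> (nat \<Rightarrow> real \<times> 'e)) measure" where
  "Ysp n = (borel :: 'e measure) \<Otimes>\<^sub>M (\<Pi>\<^sub>M k\<in>{..<n}. Mstep)"

lemma meas_Yn[measurable]: "Yn n \<in> Omega \<rightarrow>\<^sub>M Ysp n"
  unfolding Omega_def Ysp_def Yn_def
  by (intro measurable_Pair measurable_compose[OF measurable_fst] measurable_compose[OF measurable_snd measurable_restrict_subset]) auto

lemma Fn_eq: "Fn n = vimage_algebra (space Omega) (Yn n) (Ysp n)"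
  by (simp add: Fn_def Ysp_def)

lemma sets_Fn: "sets (Fn n) = {Yn n -` A \<inter> space Omega | A. A \<in> sets (Ysp n)}"
  unfolding Fn_eq by (rule sets_vimage_algebra2) (use measurable_space[OF meas_Yn] in blast)

lemma sets_Fn_sub: "sets (Fn n) \<subseteq> sets Omega"
  using meas_Yn[of n] unfolding measurable_iff_sets Fn_eq by blast

lemma space_Fn: "space Omega \<in> sets (Fn n)"
  unfolding Fn_eq using sets.top[of "vimage_algebra (space Omega) (Yn n) (Ysp n)"] by simp

definition Ggen :: "(real \<times> 'e::polish_space) set set" where
  "Ggen = {{0..t} \<times> B | t B. 0 \<le> t \<and> B \<in> sets borel}"

lemma Ggen_sub: "Ggen \<subseteq> Pow ({0..} \<times> UNIV)"
  by (auto simp: Ggen_def)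

lemma Ggen_I: "0 \<le> t \<Longrightarrow> B \<in> sets borel \<Longrightarrow> {0..t} \<times> B \<in> Ggen"
  unfolding Ggen_def by blast

lemma Ggen_in: "(X :: (real \<times> 'e::polish_space) set) \<in> Ggen \<Longrightarrow> X \<in> sets Mstep"
proof -
  assume "X \<in> Ggen"
  then obtain t B where X: "X = {0..t} \<times> B" "B \<in> sets (borel :: 'e measure)" by (auto simp: Ggen_def)
  then have "X \<in> sets ((borel :: real measure) \<Otimes>\<^sub>M (borel :: 'e measure))" by auto
  then have "X \<in> sets (borel :: (real \<times> 'e) measure)" by (metis borel_prod)
  moreover have "X = X \<inter> ({0..} \<times> UNIV)" using X by auto
  ultimately show ?thesis unfolding sets_Mstep by blast
qed

lemma Ggen_Int_stable: "Int_stable (Ggen :: (real \<times> 'e::polish_space) set set)"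
proof (rule Int_stableI)
  fix a b :: "(real \<times> 'e) set" assume "a \<in> Ggen" "b \<in> Ggen"
  then obtain t B t' B' where "a = {0..t} \<times> B" "0 \<le> t" "B \<in> sets borel"
     "b = {0..t'} \<times> B'" "0 \<le> t'" "B' \<in> sets borel" by (auto simp: Ggen_def)
  then have "a \<inter> b = {0..min t t'} \<times> (B \<inter> B')" by auto
  then show "a \<inter> b \<in> Ggen" using \<open>0 \<le> t\<close> \<open>0 \<le> t'\<close> \<open>B \<in> _\<close> \<open>B' \<in> _\<close>
    unfolding Ggen_def by (intro CollectI exI[of _ "min t t'"] exI[of _ "B \<inter> B'"]) auto
qed

lemma sets_Mstep_gen: "sets Mstep = sigma_sets ({0..} \<times> UNIV) (Ggen :: (real \<times> 'e::polish_space) set set)"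
proof
  let ?\<Omega> = "{0..} \<times> (UNIV :: 'e set)"
  interpret S: sigma_algebra ?\<Omega> "sigma_sets ?\<Omega> Ggen"
    by (rule sigma_algebra_sigma_sets) (rule Ggen_sub)
  show "sigma_sets ?\<Omega> Ggen \<subseteq> sets Mstep"
    using sets.sigma_sets_subset[of Ggen Mstep] Ggen_in by (auto simp: space_Mstep)
  have half: "{0..} \<times> b \<in> sigma_sets ?\<Omega> Ggen" if b: "b \<in> sets borel" for b :: "'e set"
  proof -
    have "{0..} \<times> b = (\<Union>i::nat. {0..real i} \<times> b)"
      by (auto simp: real_arch_simple)
    also have "\<dots> \<in> sigma_sets ?\<Omega> Ggen"
      using b by (intro S.countable_UN' sigma_sets.Basic) (auto intro!: Ggen_I)
    finally show ?thesis .
  qed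
  have rect0: "(a \<inter> {0..}) \<times> b \<in> sigma_sets ?\<Omega> Ggen"
    if a: "a \<in> sigma_sets UNIV (range atMost)" and b: "b \<in> sets borel" for a :: "real set" and b :: "'e set"
    using a
  proof (induct a rule: sigma_sets.induct)
      case (Basic a)
      then obtain t where t: "a = {..t}" by auto
      show ?case
      proof cases
        assume "0 \<le> t"
        then have "(a \<inter> {0..}) \<times> b = {0..t} \<times> b" using t by auto
        then show ?thesis using b \<open>0 \<le> t\<close> by (auto intro!: sigma_sets.Basic Ggen_I)
      next
        assume "\<not> 0 \<le> t"
        then have "(a \<inter> {0..}) \<times> b = {}" using t by auto
        then show ?thesis using sigma_sets.Empty by metis
      qed
    next
      case Empty then show ?case by (simp add: sigma_sets.Empty)
    next
      case (Compl a)
      have "((UNIV - a) \<inter> {0..}) \<times> b = ({0..} \<times> b) - ((a \<inter> {0..}) \<times> b)" by auto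
      then show ?case using half[OF b] Compl by (simp add: S.Diff)
    next
      case (Union A)
      have "((\<Union>i. A i) \<inter> {0..}) \<times> b = (\<Union>i. (A i \<inter> {0..}) \<times> b)" by auto
      then show ?case by (simp only:) (rule sigma_sets.Union, rule Union(2))
  qed
  have rect: "(a \<inter> {0..}) \<times> b \<in> sigma_sets ?\<Omega> Ggen"
    if a: "a \<in> sets (borel :: real measure)" and b: "b \<in> sets borel" for a :: "real set" and b :: "'e set"
  proof -
    have "a \<in> sigma_sets UNIV (range atMost)"
      using a by (simp add: borel_eq_atMost)
    then show ?thesis using rect0 b by blast
  qed
  have main: "S \<inter> ?\<Omega> \<in> sigma_sets ?\<Omega> Ggen"
    if "S \<in> sigma_sets UNIV {a \<times> b | a b. a \<in> sets (borel :: real measure) \<and> b \<in> sets (borel :: 'e measure)}" for S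
    using that
  proof (induct S rule: sigma_sets.induct)
    case (Basic S)
    then obtain a b where "S = a \<times> b" "a \<in> sets (borel :: real measure)" "b \<in> sets (borel :: 'e measure)" by auto
    moreover have "(a \<times> b) \<inter> ?\<Omega> = (a \<inter> {0..}) \<times> b" by auto
    ultimately show ?case using rect by simp
  next
    case Empty then show ?case by (simp add: sigma_sets.Empty)
  next
    case (Compl S)
    have "(UNIV - S) \<inter> ?\<Omega> = ?\<Omega> - (S \<inter> ?\<Omega>)" by auto
    then show ?case using Compl by (simp add: S.compl_sets)
  next
    case (Union A)
    have "(\<Union>i. A i) \<inter> ?\<Omega> = (\<Union>i. A i \<inter> ?\<Omega>)" by auto
    then show ?case by (simp only:) (rule sigma_sets.Union, rule Union(2))
  qed
  show "sets Mstep \<subseteq> sigma_sets ?\<Omega> Ggen"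
  proof
    fix S :: "(real \<times> 'e) set" assume "S \<in> sets Mstep"
    then obtain S' where S': "S = S' \<inter> ?\<Omega>" "S' \<in> sets (borel :: (real \<times> 'e) measure)"
      unfolding sets_Mstep by auto
    then have "S' \<in> sets ((borel :: real measure) \<Otimes>\<^sub>M (borel :: 'e measure))"
      by (metis borel_prod)
    then have "S' \<in> sigma_sets UNIV {a \<times> b | a b. a \<in> sets (borel :: real measure) \<and> b \<in> sets (borel :: 'e measure)}"
      by (simp add: sets_pair_measure)
    then show "S \<in> sigma_sets ?\<Omega> Ggen" using main S' by simp
  qed
qed

lemma integral_measurable_subprob_algebra2:
  fixes f :: "_ \<Rightarrow> _ \<Rightarrow> real"
  assumes f[measurable]: "(\<lambda>(x, y). f x y) \<in> borel_measurable (M \<Otimes>\<^sub>M N)"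
  assumes N[measurable]: "L \<in> measurable M (subprob_algebra N)"
  shows "(\<lambda>x. integral\<^sup>L (L x) (f x)) \<in> borel_measurable M"
proof -
  note integral_measurable_subprob_algebra[measurable]
  note measurable_distr2[measurable]
  have "(\<lambda>x. integral\<^sup>L (distr (L x) (M \<Otimes>\<^sub>M N) (\<lambda>y. (x, y))) (\<lambda>(x, y). f x y)) \<in> borel_measurable M"
    by measurable
  then show "(\<lambda>x. integral\<^sup>L (L x) (f x)) \<in> borel_measurable M"
    by (rule measurable_cong[THEN iffD1, rotated])
       (simp add: integral_distr)
qed

locale setting =
  fixes K :: "'e::polish_space \<Rightarrow> (real \<times> 'e) measure" and x0 :: 'e and P :: "'e omega measure"
  assumes K: "semi_markov_kernel K"
    and PM: "path_measure K x0 P"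
begin

lemma P_prob: "prob_space P" and sets_P: "sets P = sets Omega"
  using PM by (auto simp: path_measure_def)

sublocale prob_space P by (rule P_prob)

lemma space_P: "space P = space Omega"
  using sets_eq_imp_space_eq[OF sets_P] .

lemma meas_P_cong: "measurable P N = measurable Omega N"
  by (rule measurable_cong_sets[OF sets_P refl])

lemma borel_P_cong: "borel_measurable P = borel_measurable Omega"
  by (rule meas_P_cong)

lemma space_P_ne: "space P \<noteq> {}"
  using not_empty .

lemma Kx_meas: "(\<lambda>\<omega>. K (Xn \<omega> m)) \<in> P \<rightarrow>\<^sub>M subprob_algebra Mstep"
  unfolding meas_P_cong by (rule measurable_compose[OF meas_Xn K_meas[OF K]])

lemma path_prop: "A \<in> sets (Fn n) \<Longrightarrow> 0 \<le> t \<Longrightarrow> B \<in> sets borel \<Longrightarrow>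
   measure P {\<omega> \<in> A. Tn \<omega> (Suc n) \<le> t \<and> Xn \<omega> (Suc n) \<in> B}
          = (\<integral>\<omega>. indicator A \<omega> * Qk K t B (Xn \<omega> n) \<partial>P)"
  using PM unfolding path_measure_def by blast

definition mu1 :: "nat \<Rightarrow> (('e \<times> (nat \<Rightarrow> real \<times> 'e)) \<times> (real \<times> 'e)) measure" where
  "mu1 m = distr P (Ysp m \<Otimes>\<^sub>M Mstep) (\<lambda>\<omega>. (Yn m \<omega>, snd \<omega> m))"

definition mu2 :: "nat \<Rightarrow> (('e \<times> (nat \<Rightarrow> real \<times> 'e)) \<times> (real \<times> 'e)) measure" where
  "mu2 m = P \<bind> (\<lambda>\<omega>. distr (K (Xn \<omega> m)) (Ysp m \<Otimes>\<^sub>M Mstep) (\<lambda>p. (Yn m \<omega>, p)))"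

lemma mu2_kernel: "(\<lambda>\<omega>. distr (K (Xn \<omega> m)) (Ysp m \<Otimes>\<^sub>M Mstep) (\<lambda>p. (Yn m \<omega>, p)))
   \<in> P \<rightarrow>\<^sub>M subprob_algebra (Ysp m \<Otimes>\<^sub>M Mstep)"
proof (rule measurable_distr2[OF _ Kx_meas])
  have "(\<lambda>(\<omega>, p). (Yn m \<omega>, p)) \<in> Omega \<Otimes>\<^sub>M Mstep \<rightarrow>\<^sub>M Ysp m \<Otimes>\<^sub>M Mstep"
    by measurable
  then show "(\<lambda>(\<omega>, p). (Yn m \<omega>, p)) \<in> P \<Otimes>\<^sub>M Mstep \<rightarrow>\<^sub>M Ysp m \<Otimes>\<^sub>M Mstep"
    by (simp add: measurable_cong_sets[OF sets_pair_measure_cong[OF sets_P refl] refl])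
qed

lemma meas_YZ: "(\<lambda>\<omega>. (Yn m \<omega>, snd \<omega> m)) \<in> P \<rightarrow>\<^sub>M Ysp m \<Otimes>\<^sub>M Mstep"
  unfolding meas_P_cong by measurable

lemma sets_mu1: "sets (mu1 m) = sets (Ysp m \<Otimes>\<^sub>M Mstep)"
  by (simp add: mu1_def)

lemma sets_mu2: "sets (mu2 m) = sets (Ysp m \<Otimes>\<^sub>M Mstep)"
  unfolding mu2_def
  by (rule sets_bind[OF _ space_P_ne]) simp

lemma Fn_from_Ysp: "a \<in> sets (Ysp m) \<Longrightarrow> Yn m -` a \<inter> space Omega \<in> sets (Fn m)"
  unfolding sets_Fn by blast

lemma mu_rect:
  assumes a: "a \<in> sets (Ysp m)" and b: "b \<in> sets Mstep"
  shows "emeasure (mu1 m) (a \<times> b) = emeasure (mu2 m) (a \<times> b)"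
proof -
  define A where "A = Yn m -` a \<inter> space Omega"
  have A: "A \<in> sets (Fn m)" unfolding A_def using a by (rule Fn_from_Ysp)
  have AO: "A \<in> sets Omega" using A sets_Fn_sub by blast
  have AP: "A \<in> sets P" using AO sets_P by simp
  define \<nu>1 where "\<nu>1 = distr (density P (indicator A)) Mstep (\<lambda>\<omega>. snd \<omega> m)"
  define \<nu>2 where "\<nu>2 = density P (indicator A) \<bind> (\<lambda>\<omega>. K (Xn \<omega> m))"
  have dens_meas: "(\<lambda>\<omega>. K (Xn \<omega> m)) \<in> density P (indicator A) \<rightarrow>\<^sub>M subprob_algebra Mstep"
    using Kx_meas by (simp add: measurable_cong_sets[OF sets_density refl])
  have snd_meas: "(\<lambda>\<omega>. snd \<omega> m) \<in> P \<rightarrow>\<^sub>M Mstep" unfolding meas_P_cong by measurable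
  have e1: "emeasure \<nu>1 b = emeasure P (A \<inter> {\<omega>. snd \<omega> m \<in> b})" if b: "b \<in> sets Mstep" for b
  proof -
    have "emeasure \<nu>1 b = emeasure (density P (indicator A)) ((\<lambda>\<omega>. snd \<omega> m) -` b \<inter> space P)"
      unfolding \<nu>1_def using b snd_meas
      by (subst emeasure_distr) (auto simp: measurable_cong_sets[OF sets_density refl])
    also have "\<dots> = emeasure P (A \<inter> ((\<lambda>\<omega>. snd \<omega> m) -` b \<inter> space P))"
      using AP b snd_meas by (subst emeasure_restricted) (auto intro: measurable_sets)  
    also have "\<dots> = emeasure P (A \<inter> {\<omega>. snd \<omega> m \<in> b})"
      using sets.sets_into_space[OF AP] by (intro arg_cong[where f="emeasure P"]) auto
    finally show ?thesis .
  qed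
  have e2: "emeasure \<nu>2 b = (\<integral>\<^sup>+\<omega>. indicator A \<omega> * emeasure (K (Xn \<omega> m)) b \<partial>P)" if b: "b \<in> sets Mstep" for b
  proof -
    have "emeasure \<nu>2 b = (\<integral>\<^sup>+\<omega>. emeasure (K (Xn \<omega> m)) b \<partial>density P (indicator A))"
      unfolding \<nu>2_def using b dens_meas space_P_ne
      by (subst emeasure_bind) auto
    also have "\<dots> = (\<integral>\<^sup>+\<omega>. indicator A \<omega> * emeasure (K (Xn \<omega> m)) b \<partial>P)"
      using AP b Kx_meas
      by (subst nn_integral_density) (auto intro: measurable_emeasure_kernel[OF Kx_meas b])
    finally show ?thesis .
  qed
  have nu_eq: "\<nu>1 = \<nu>2"
  proof (rule measure_eqI_generator_eq[OF Ggen_Int_stable Ggen_sub])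
    show "sets \<nu>1 = sigma_sets ({0..} \<times> UNIV) Ggen" unfolding \<nu>1_def by (simp add: sets_Mstep_gen)
    have "sets \<nu>2 = sets Mstep" unfolding \<nu>2_def
      by (rule sets_bind) (use space_P_ne K_sets[OF K] in auto)
    then show "sets \<nu>2 = sigma_sets ({0..} \<times> UNIV) Ggen" by (simp add: sets_Mstep_gen)
    show "range (\<lambda>i::nat. {0..real i} \<times> UNIV) \<subseteq> Ggen" by (auto intro!: Ggen_I)
    show "(\<Union>i::nat. {0..real i} \<times> UNIV) = ({0..} \<times> UNIV :: (real \<times> 'e) set)"
      by (auto simp: real_arch_simple)
    show "emeasure \<nu>1 ({0..real i} \<times> UNIV) \<noteq> \<infinity>" for i
    proof -
      have "emeasure \<nu>1 ({0..real i} \<times> UNIV) = emeasure P (A \<inter> {\<omega>. snd \<omega> m \<in> {0..real i} \<times> UNIV})"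
        by (rule e1) (rule Ggen_in, auto intro!: Ggen_I)
      also have "\<dots> \<noteq> \<infinity>" by (simp add: emeasure_eq_measure)
      finally show ?thesis .
    qed
    fix X :: "(real \<times> 'e) set" assume X: "X \<in> Ggen"
    then obtain t B where X': "X = {0..t} \<times> B" "0 \<le> t" "B \<in> sets borel" by (auto simp: Ggen_def)
    have XM: "X \<in> sets Mstep" using X by (rule Ggen_in)
    have "emeasure \<nu>1 X = emeasure P (A \<inter> {\<omega>. snd \<omega> m \<in> X})" using XM by (rule e1)
    also have "A \<inter> {\<omega>. snd \<omega> m \<in> X} = {\<omega> \<in> A. Tn \<omega> (Suc m) \<le> t \<and> Xn \<omega> (Suc m) \<in> B}"
      using sets.sets_into_space[OF AO] X' by (auto simp: Tn_def Xn_def space_Omega PiE_def Pi_def mem_Times_iff; fastforce)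
    also have "emeasure P \<dots> = ennreal (\<integral>\<omega>. indicator A \<omega> * Qk K t B (Xn \<omega> m) \<partial>P)"
      using path_prop[OF A X'(2,3)] by (simp add: emeasure_eq_measure)
    also have "\<dots> = (\<integral>\<^sup>+\<omega>. ennreal (indicator A \<omega> * Qk K t B (Xn \<omega> m)) \<partial>P)"
    proof (rule nn_integral_eq_integral[symmetric])
      have mq: "(\<lambda>\<omega>. Qk K t B (Xn \<omega> m)) \<in> borel_measurable P"
        unfolding Qk_def measure_def X'(1)[symmetric]
        by (intro borel_measurable_enn2real measurable_emeasure_kernel[OF Kx_meas XM])
      show "integrable P (\<lambda>\<omega>. indicator A \<omega> * Qk K t B (Xn \<omega> m))"
      proof (rule integrable_const_bound[where B=1])
        show "AE \<omega> in P. norm (indicator A \<omega> * Qk K t B (Xn \<omega> m)) \<le> 1"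
          using prob_space.prob_le_1[OF K_prob[OF K]] by (auto simp: Qk_def indicator_def)
        show "(\<lambda>\<omega>. indicator A \<omega> * Qk K t B (Xn \<omega> m)) \<in> borel_measurable P"
          using mq AP by measurable
      qed
      show "AE \<omega> in P. 0 \<le> indicator A \<omega> * Qk K t B (Xn \<omega> m)" by (simp add: Qk_def)
    qed
    also have "\<dots> = (\<integral>\<^sup>+\<omega>. indicator A \<omega> * emeasure (K (Xn \<omega> m)) X \<partial>P)"
      using X' by (intro nn_integral_cong)
        (simp add: Qk_def indicator_def finite_measure.emeasure_eq_measure[OF prob_space.finite_measure[OF K_prob[OF K]]] ennreal_mult)
    also have "\<dots> = emeasure \<nu>2 X" using XM by (rule e2[symmetric])
    finally show "emeasure \<nu>1 X = emeasure \<nu>2 X" .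
  qed
  have "emeasure (mu1 m) (a \<times> b) = emeasure P (A \<inter> {\<omega>. snd \<omega> m \<in> b})"
  proof -
    have "emeasure (mu1 m) (a \<times> b) = emeasure P ((\<lambda>\<omega>. (Yn m \<omega>, snd \<omega> m)) -` (a \<times> b) \<inter> space P)"
      unfolding mu1_def using a b meas_YZ by (subst emeasure_distr) auto
    also have "(\<lambda>\<omega>. (Yn m \<omega>, snd \<omega> m)) -` (a \<times> b) \<inter> space P = A \<inter> {\<omega>. snd \<omega> m \<in> b}"
      by (auto simp: A_def space_P)
    finally show ?thesis .
  qed
  also have "\<dots> = emeasure \<nu>1 b" using b by (rule e1[symmetric])
  also have "\<dots> = emeasure \<nu>2 b" by (simp add: nu_eq)
  also have "\<dots> = (\<integral>\<^sup>+\<omega>. indicator A \<omega> * emeasure (K (Xn \<omega> m)) b \<partial>P)" using b by (rule e2)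
  also have "\<dots> = emeasure (mu2 m) (a \<times> b)"
  proof -
    have "emeasure (mu2 m) (a \<times> b) = (\<integral>\<^sup>+\<omega>. emeasure (distr (K (Xn \<omega> m)) (Ysp m \<Otimes>\<^sub>M Mstep) (\<lambda>p. (Yn m \<omega>, p))) (a \<times> b) \<partial>P)"
      unfolding mu2_def using a b mu2_kernel space_P_ne by (subst emeasure_bind) auto
    also have "\<dots> = (\<integral>\<^sup>+\<omega>. indicator A \<omega> * emeasure (K (Xn \<omega> m)) b \<partial>P)"
    proof (rule nn_integral_cong)
      fix \<omega> assume \<omega>: "\<omega> \<in> space P"
      have Ym: "Yn m \<omega> \<in> space (Ysp m)"
        using measurable_space[OF meas_Yn, of \<omega> m] \<omega> space_P by simp
      have "emeasure (distr (K (Xn \<omega> m)) (Ysp m \<Otimes>\<^sub>M Mstep) (\<lambda>p. (Yn m \<omega>, p))) (a \<times> b)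
          = emeasure (K (Xn \<omega> m)) ((\<lambda>p. (Yn m \<omega>, p)) -` (a \<times> b) \<inter> space (K (Xn \<omega> m)))"
        using a b Ym by (subst emeasure_distr) (auto simp: measurable_cong_sets[OF K_sets[OF K] refl])
      also have "\<dots> = indicator A \<omega> * emeasure (K (Xn \<omega> m)) b"
        using \<omega> sets.sets_into_space[OF b] by (auto simp: A_def space_P indicator_def K_space[OF K] space_Mstep Int_absorb2)
      finally show "emeasure (distr (K (Xn \<omega> m)) (Ysp m \<Otimes>\<^sub>M Mstep) (\<lambda>p. (Yn m \<omega>, p))) (a \<times> b) = indicator A \<omega> * emeasure (K (Xn \<omega> m)) b" .
    qed
    finally show ?thesis by simp
  qed
  finally show ?thesis .
qed

lemma mu_eq: "mu1 m = mu2 m"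
proof (rule measure_eqI_generator_eq[OF Int_stable_pair_measure_generator[of "Ysp m" Mstep]])
  show "{a \<times> b |a b. a \<in> sets (Ysp m) \<and> b \<in> sets Mstep} \<subseteq> Pow (space (Ysp m) \<times> space Mstep)"
    by (auto dest: sets.sets_into_space)
  show "sets (mu1 m) = sigma_sets (space (Ysp m) \<times> space Mstep) {a \<times> b |a b. a \<in> sets (Ysp m) \<and> b \<in> sets Mstep}"
    by (simp add: sets_mu1 sets_pair_measure)
  show "sets (mu2 m) = sigma_sets (space (Ysp m) \<times> space Mstep) {a \<times> b |a b. a \<in> sets (Ysp m) \<and> b \<in> sets Mstep}"
    by (simp add: sets_mu2 sets_pair_measure)
  show "range (\<lambda>i::nat. space (Ysp m) \<times> space Mstep) \<subseteq> {a \<times> b |a b. a \<in> sets (Ysp m) \<and> b \<in> sets Mstep}"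
    by auto
  show "(\<Union>i::nat. space (Ysp m) \<times> space Mstep) = space (Ysp m) \<times> space Mstep" by simp
  show "emeasure (mu1 m) (space (Ysp m) \<times> space Mstep) \<noteq> \<infinity>" for i :: nat
    unfolding mu1_def using meas_YZ by (subst emeasure_distr) (auto simp: space_pair_measure emeasure_eq_measure)
qed (auto intro: mu_rect)

end

definition yX :: "nat \<Rightarrow> 'e \<times> (nat \<Rightarrow> real \<times> 'e) \<Rightarrow> 'e" where
  "yX j y = (if j = 0 then fst y else snd (snd y (j - 1)))"

definition yS :: "nat \<Rightarrow> 'e \<times> (nat \<Rightarrow> real \<times> 'e) \<Rightarrow> real" where
  "yS j y = (\<Sum>i<j. fst (snd y i))"

lemma Sn_alt: "Sn \<omega> j = (\<Sum>i<j. fst (snd \<omega> i))"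
proof (induct j)
  case 0 then show ?case by (simp add: Sn_def Tn_def)
next
  case (Suc j)
  have "Sn \<omega> (Suc j) = Sn \<omega> j + Tn \<omega> (Suc j)" by (simp add: Sn_def)
  then show ?case using Suc by (simp add: Tn_def)
qed

lemma Sn_Suc: "Sn \<omega> (Suc j) = Sn \<omega> j + fst (snd \<omega> j)"
  by (simp add: Sn_alt)

lemma Tn_Suc: "Tn \<omega> (Suc j) = fst (snd \<omega> j)" by (simp add: Tn_def)
lemma Xn_Suc: "Xn \<omega> (Suc j) = snd (snd \<omega> j)" by (simp add: Xn_def)

lemma Xn_Y: "j \<le> m \<Longrightarrow> Xn \<omega> j = yX j (Yn m \<omega>)"
  by (auto simp: Xn_def yX_def Yn_def)

lemma Sn_Y: "j \<le> m \<Longrightarrow> Sn \<omega> j = yS j (Yn m \<omega>)"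
  by (auto simp: Sn_alt yS_def Yn_def intro!: sum.cong)

lemma meas_yX[measurable]: "j \<le> m \<Longrightarrow> yX j \<in> Ysp m \<rightarrow>\<^sub>M borel"
  unfolding yX_def Ysp_def
  by (cases "j = 0") (auto intro!: measurable_compose[OF measurable_snd meas_Mstep_snd]
        measurable_compose[OF measurable_snd measurable_component_singleton])

lemma meas_yS[measurable]: "j \<le> m \<Longrightarrow> yS j \<in> Ysp m \<rightarrow>\<^sub>M borel"
  unfolding yS_def Ysp_def
  by (intro borel_measurable_sum measurable_compose[OF _ meas_Mstep_fst]
       measurable_compose[OF measurable_snd measurable_component_singleton]) auto

lemma space_Omega_T: "\<omega> \<in> space Omega \<Longrightarrow> 0 \<le> fst (snd \<omega> i)"
  by (auto simp: space_Omega PiE_def Pi_def mem_Times_iff)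

lemma Tn_nonneg: "\<omega> \<in> space Omega \<Longrightarrow> 0 \<le> Tn \<omega> i"
  by (auto simp: Tn_def space_Omega_T)

lemma Sn_nonneg: "\<omega> \<in> space Omega \<Longrightarrow> 0 \<le> Sn \<omega> i"
  by (auto simp: Sn_alt space_Omega_T intro!: sum_nonneg)

lemma Sn_mono: "\<omega> \<in> space Omega \<Longrightarrow> i \<le> j \<Longrightarrow> Sn \<omega> i \<le> Sn \<omega> j"
  unfolding Sn_alt by (rule sum_mono2) (auto simp: space_Omega_T)

context setting
begin

lemma one_step0:
  fixes h :: "_ \<Rightarrow> real"
  assumes h[measurable]: "h \<in> borel_measurable (Ysp m \<Otimes>\<^sub>M Mstep)"
    and hb: "\<And>z. z \<in> space (Ysp m \<Otimes>\<^sub>M Mstep) \<Longrightarrow> 0 \<le> h z \<and> h z \<le> B"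
  shows "(\<integral>\<omega>. h (Yn m \<omega>, snd \<omega> m) \<partial>P) = (\<integral>\<omega>. (\<integral>p. h (Yn m \<omega>, p) \<partial>K (Xn \<omega> m)) \<partial>P)"
proof -
  have hb': "0 \<le> h (Yn m \<omega>, p) \<and> h (Yn m \<omega>, p) \<le> B" if "\<omega> \<in> space P" "p \<in> space (K (Xn \<omega> m))" for \<omega> p
  proof (rule hb)
    have "Yn m \<omega> \<in> space (Ysp m)"
      using measurable_space[OF meas_Yn, of \<omega> m] that space_P by simp
    moreover have "p \<in> space Mstep" using that sets_eq_imp_space_eq[OF K_sets[OF K]] by simp
    ultimately show "(Yn m \<omega>, p) \<in> space (Ysp m \<Otimes>\<^sub>M Mstep)" by (simp add: space_pair_measure)
  qed
  have hY: "(\<lambda>(\<omega>, p). h (Yn m \<omega>, p)) \<in> borel_measurable (P \<Otimes>\<^sub>M Mstep)"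
  proof -
    have "(\<lambda>(\<omega>, p). h (Yn m \<omega>, p)) \<in> borel_measurable (Omega \<Otimes>\<^sub>M Mstep)" by measurable
    then show ?thesis by (simp add: measurable_cong_sets[OF sets_pair_measure_cong[OF sets_P refl] refl])
  qed
  have m1: "(\<lambda>\<omega>. h (Yn m \<omega>, snd \<omega> m)) \<in> borel_measurable P"
    using meas_YZ[of m] by measurable
  have m2: "(\<lambda>\<omega>. (\<integral>p. h (Yn m \<omega>, p) \<partial>K (Xn \<omega> m))) \<in> borel_measurable P"
    by (rule integral_measurable_subprob_algebra2[OF _ Kx_meas]) (use hY in simp)
  have "(\<integral>\<^sup>+\<omega>. ennreal (h (Yn m \<omega>, snd \<omega> m)) \<partial>P) = (\<integral>\<^sup>+z. ennreal (h z) \<partial>mu1 m)"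
    unfolding mu1_def using meas_YZ by (subst nn_integral_distr) auto
  also have "\<dots> = (\<integral>\<^sup>+z. ennreal (h z) \<partial>mu2 m)" by (simp add: mu_eq)
  also have "\<dots> = (\<integral>\<^sup>+\<omega>. (\<integral>\<^sup>+z. ennreal (h z) \<partial>distr (K (Xn \<omega> m)) (Ysp m \<Otimes>\<^sub>M Mstep) (\<lambda>p. (Yn m \<omega>, p))) \<partial>P)"
    unfolding mu2_def by (rule nn_integral_bind[OF _ mu2_kernel]) simp
  also have "\<dots> = (\<integral>\<^sup>+\<omega>. ennreal (\<integral>p. h (Yn m \<omega>, p) \<partial>K (Xn \<omega> m)) \<partial>P)"
  proof (rule nn_integral_cong)
    fix \<omega> assume \<omega>: "\<omega> \<in> space P"
    have Ym: "Yn m \<omega> \<in> space (Ysp m)"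
      using measurable_space[OF meas_Yn, of \<omega> m] \<omega> space_P by simp
    have mp: "(\<lambda>p. (Yn m \<omega>, p)) \<in> K (Xn \<omega> m) \<rightarrow>\<^sub>M Ysp m \<Otimes>\<^sub>M Mstep"
      using Ym by (simp add: measurable_cong_sets[OF K_sets[OF K] refl])
    have mh: "(\<lambda>p. h (Yn m \<omega>, p)) \<in> borel_measurable (K (Xn \<omega> m))"
      using mp by measurable
    have "(\<integral>\<^sup>+z. ennreal (h z) \<partial>distr (K (Xn \<omega> m)) (Ysp m \<Otimes>\<^sub>M Mstep) (\<lambda>p. (Yn m \<omega>, p)))
        = (\<integral>\<^sup>+p. ennreal (h (Yn m \<omega>, p)) \<partial>K (Xn \<omega> m))"
      using mp by (subst nn_integral_distr) auto
    also have "\<dots> = ennreal (\<integral>p. h (Yn m \<omega>, p) \<partial>K (Xn \<omega> m))"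
    proof (rule nn_integral_eq_integral)
      interpret Kp: prob_space "K (Xn \<omega> m)" by (rule K_prob[OF K])
      show "integrable (K (Xn \<omega> m)) (\<lambda>p. h (Yn m \<omega>, p))"
        using mh hb'[OF \<omega>] by (intro Kp.integrable_const_bound[where B=B]) (auto intro!: AE_I2)
      show "AE p in K (Xn \<omega> m). 0 \<le> h (Yn m \<omega>, p)" using hb'[OF \<omega>] by (auto intro!: AE_I2)
    qed
    finally show "(\<integral>\<^sup>+z. ennreal (h z) \<partial>distr (K (Xn \<omega> m)) (Ysp m \<Otimes>\<^sub>M Mstep) (\<lambda>p. (Yn m \<omega>, p))) =
         ennreal (\<integral>p. h (Yn m \<omega>, p) \<partial>K (Xn \<omega> m))" .
  qed
  finally have eq: "(\<integral>\<^sup>+\<omega>. ennreal (h (Yn m \<omega>, snd \<omega> m)) \<partial>P) = (\<integral>\<^sup>+\<omega>. ennreal (\<integral>p. h (Yn m \<omega>, p) \<partial>K (Xn \<omega> m)) \<partial>P)" .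
  have n1: "AE \<omega> in P. 0 \<le> h (Yn m \<omega>, snd \<omega> m)"
    by (rule AE_I2) (use hb measurable_space[OF meas_YZ] in blast)
  have n2: "AE \<omega> in P. 0 \<le> (\<integral>p. h (Yn m \<omega>, p) \<partial>K (Xn \<omega> m))"
    by (rule AE_I2, rule integral_nonneg_AE, rule AE_I2) (use hb' in blast)
  show ?thesis using integral_eq_nn_integral[OF m1 n1] integral_eq_nn_integral[OF m2 n2] eq by simp
qed

lemma one_step:
  fixes h :: "_ \<Rightarrow> real"
  assumes A: "A \<in> sets (Fn m)"
    and h[measurable]: "h \<in> borel_measurable (Ysp m \<Otimes>\<^sub>M Mstep)"
    and hb: "\<And>z. z \<in> space (Ysp m \<Otimes>\<^sub>M Mstep) \<Longrightarrow> 0 \<le> h z \<and> h z \<le> B"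
  shows "(\<integral>\<omega>. indicator A \<omega> * h (Yn m \<omega>, snd \<omega> m) \<partial>P)
       = (\<integral>\<omega>. indicator A \<omega> * (\<integral>p. h (Yn m \<omega>, p) \<partial>K (Xn \<omega> m)) \<partial>P)"
proof -
  obtain a where a: "a \<in> sets (Ysp m)" and Aa: "A = Yn m -` a \<inter> space Omega"
    using A unfolding sets_Fn by blast
  define h' where "h' z = indicator a (fst z) * h z" for z
  have h'm: "h' \<in> borel_measurable (Ysp m \<Otimes>\<^sub>M Mstep)" unfolding h'_def using a by measurable
  have 1: "(\<integral>\<omega>. indicator A \<omega> * h (Yn m \<omega>, snd \<omega> m) \<partial>P) = (\<integral>\<omega>. h' (Yn m \<omega>, snd \<omega> m) \<partial>P)"
    by (intro Bochner_Integration.integral_cong refl) (auto simp: Aa h'_def space_P indicator_def)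
  have 2: "(\<integral>\<omega>. indicator A \<omega> * (\<integral>p. h (Yn m \<omega>, p) \<partial>K (Xn \<omega> m)) \<partial>P)
     = (\<integral>\<omega>. (\<integral>p. h' (Yn m \<omega>, p) \<partial>K (Xn \<omega> m)) \<partial>P)"
    by (intro Bochner_Integration.integral_cong refl) (auto simp: Aa h'_def space_P indicator_def)
  have "(\<integral>\<omega>. h' (Yn m \<omega>, snd \<omega> m) \<partial>P) = (\<integral>\<omega>. (\<integral>p. h' (Yn m \<omega>, p) \<partial>K (Xn \<omega> m)) \<partial>P)"
    by (rule one_step0[OF h'm, where B="max B 0"]) (auto simp: h'_def indicator_def max.coboundedI1 dest: hb)
  then show ?thesis using 1 2 by simp
qed

end

lemma Icc_UNIV_sets: "{0..t} \<times> UNIV \<in> sets Mstep"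
proof cases
  assume "0 \<le> t" then show ?thesis by (intro Ggen_in Ggen_I) auto
next
  assume "\<not> 0 \<le> t" then have "{0..t} \<times> UNIV = ({} :: (real \<times> 'a::polish_space) set)" by auto
  then show ?thesis by simp
qed

lemma Lf_eq:
  fixes \<mu> :: "(real \<times> 'e::polish_space) measure"
  assumes prob: "prob_space \<mu>" and sets\<mu>: "sets \<mu> = sets Mstep"
  shows "(LINT t:{0..s}|lborel. 1 - measure \<mu> ({0..t} \<times> UNIV)) = (\<integral>p. max 0 (min (fst p) s) \<partial>\<mu>)"
proof -
  interpret \<mu>: prob_space \<mu> by (rule prob)
  interpret pair_sigma_finite \<mu> lborel by unfold_locales
  have space\<mu>: "space \<mu> = {0..} \<times> UNIV"
    using sets_eq_imp_space_eq[OF sets\<mu>] by (simp add: space_Mstep)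
  define Q where "Q t = measure \<mu> ({0..t} \<times> UNIV)" for t
  have Qs: "{0..t} \<times> UNIV \<in> sets \<mu>" for t using Icc_UNIV_sets sets\<mu> by simp
  have monoQ: "mono Q"
    unfolding Q_def mono_def using Qs by (intro allI impI \<mu>.finite_measure_mono) auto
  have Qm: "Q \<in> borel_measurable borel" by (rule borel_measurable_mono[OF monoQ])
  have Q1: "Q t \<le> 1" for t unfolding Q_def by (rule \<mu>.prob_le_1)
  have mfst[measurable]: "fst \<in> borel_measurable \<mu>"
    by (simp add: measurable_cong_sets[OF sets\<mu> refl])
  have lhs_m: "(\<lambda>t. indicator {0..s} t * (1 - Q t)) \<in> borel_measurable lborel"
    using Qm by (simp add: measurable_cong_sets[OF sets_lborel refl])
  have "(LINT t:{0..s}|lborel. 1 - Q t) = (\<integral>t. indicator {0..s} t * (1 - Q t) \<partial>lborel)"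
    by (simp add: set_lebesgue_integral_def)
  also have "\<dots> = enn2real (\<integral>\<^sup>+t. ennreal (indicator {0..s} t * (1 - Q t)) \<partial>lborel)"
    using lhs_m Q1 by (intro integral_eq_nn_integral) (auto simp: indicator_def)
  also have "(\<integral>\<^sup>+t. ennreal (indicator {0..s} t * (1 - Q t)) \<partial>lborel)
      = (\<integral>\<^sup>+t. (\<integral>\<^sup>+p. ennreal (of_bool (0 \<le> t \<and> t \<le> s \<and> t < fst p)) \<partial>\<mu>) \<partial>lborel)"
  proof (rule nn_integral_cong)
    fix t :: real
    have "(\<integral>\<^sup>+p. ennreal (of_bool (0 \<le> t \<and> t \<le> s \<and> t < fst p)) \<partial>\<mu>)
        = (\<integral>\<^sup>+p. ennreal (indicator {0..s} t) * indicator (space \<mu> - {0..t} \<times> UNIV) p \<partial>\<mu>)"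
      by (intro nn_integral_cong) (auto simp: indicator_def space\<mu>)
    also have "\<dots> = ennreal (indicator {0..s} t) * emeasure \<mu> (space \<mu> - {0..t} \<times> UNIV)"
      using Qs by (intro nn_integral_cmult_indicator) auto
    also have "\<dots> = ennreal (indicator {0..s} t * (1 - Q t))"
      using Qs by (simp add: \<mu>.emeasure_eq_measure \<mu>.prob_compl Q_def ennreal_mult[symmetric] indicator_def)
    finally show "ennreal (indicator {0..s} t * (1 - Q t)) = (\<integral>\<^sup>+p. ennreal (of_bool (0 \<le> t \<and> t \<le> s \<and> t < fst p)) \<partial>\<mu>)"
      by simp
  qed
  also have "\<dots> = (\<integral>\<^sup>+p. (\<integral>\<^sup>+t. ennreal (of_bool (0 \<le> t \<and> t \<le> s \<and> t < fst p)) \<partial>lborel) \<partial>\<mu>)"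
  proof (rule Fubini')
    have "(\<lambda>(p, t). ennreal (of_bool (0 \<le> t \<and> t \<le> s \<and> t < fst p))) \<in> borel_measurable (Mstep \<Otimes>\<^sub>M borel)"
      by measurable
    then show "(\<lambda>(p, t). ennreal (of_bool (0 \<le> t \<and> t \<le> s \<and> t < fst p))) \<in> borel_measurable (\<mu> \<Otimes>\<^sub>M lborel)"
      by (simp add: measurable_cong_sets[OF sets_pair_measure_cong[OF sets\<mu> sets_lborel] refl])
  qed
  also have "\<dots> = (\<integral>\<^sup>+p. ennreal (max 0 (min (fst p) s)) \<partial>\<mu>)"
  proof (rule nn_integral_cong)
    fix p assume p: "p \<in> space \<mu>"
    then have a: "0 \<le> fst p" by (auto simp: space\<mu>)
    have "(\<integral>\<^sup>+t. ennreal (of_bool (0 \<le> t \<and> t \<le> s \<and> t < fst p)) \<partial>lborel)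
        = (\<integral>\<^sup>+t. indicator {t. 0 \<le> t \<and> t \<le> s \<and> t < fst p} t \<partial>lborel)"
      by (intro nn_integral_cong) (auto simp: indicator_def)
    also have "\<dots> = emeasure lborel {t. 0 \<le> t \<and> t \<le> s \<and> t < fst p}"
      by (rule nn_integral_indicator) simp
    also have "\<dots> = ennreal (max 0 (min (fst p) s))"
    proof (cases "fst p \<le> s")
      case True
      then have "{t. 0 \<le> t \<and> t \<le> s \<and> t < fst p} = {0..<fst p}" by auto
      then show ?thesis using True a by simp
    next
      case False
      show ?thesis
      proof (cases "0 \<le> s")
        case True
        then have "{t. 0 \<le> t \<and> t \<le> s \<and> t < fst p} = {0..s}" using False by auto
        then show ?thesis using True False by simp
      next
        case F2: False
        then have e: "{t. 0 \<le> t \<and> t \<le> s \<and> t < fst p} = {}" by auto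
        show ?thesis unfolding e using F2 by simp
      qed
    qed
    finally show "(\<integral>\<^sup>+t. ennreal (of_bool (0 \<le> t \<and> t \<le> s \<and> t < fst p)) \<partial>lborel) = ennreal (max 0 (min (fst p) s))" .
  qed
  also have "enn2real \<dots> = (\<integral>p. max 0 (min (fst p) s) \<partial>\<mu>)"
    by (rule integral_eq_nn_integral[symmetric]) auto
  finally show ?thesis by (simp add: Q_def)
qed

definition bm :: "(real \<Rightarrow> 'e::polish_space \<Rightarrow> real) \<Rightarrow> bool" where
  "bm u \<longleftrightarrow> (\<lambda>(s, x). u s x) \<in> borel_measurable (borel \<Otimes>\<^sub>M borel) \<and> (\<exists>B. \<forall>s x. \<bar>u s x\<bar> \<le> B)"

lemma supnorm_ge: "bounded (range f) \<Longrightarrow> \<bar>f x\<bar> \<le> supnorm f"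
  unfolding supnorm_def
  by (rule cSUP_upper) (auto simp: bounded_iff bdd_above_def)

lemma supnorm_nonneg: "bounded (range f) \<Longrightarrow> 0 \<le> supnorm f"
  using supnorm_ge[of f undefined] by linarith

locale problem =
  fixes K :: "'e::polish_space \<Rightarrow> (real \<times> 'e) measure" and c g :: "'e \<Rightarrow> real" and T :: real
  assumes K: "semi_markov_kernel K"
    and c_meas[measurable]: "c \<in> borel_measurable borel" and c_bdd: "bounded (range c)"
    and c_nonneg: "\<And>x. 0 \<le> c x"
    and g_meas[measurable]: "g \<in> borel_measurable borel" and g_bdd: "bounded (range g)"
    and g_nonneg: "\<And>x. 0 \<le> g x"
    and T: "0 \<le> T"
    and beta: "betaQ K T < 1"
begin

abbreviation "\<beta> \<equiv> betaQ K T"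
abbreviation "Bc \<equiv> supnorm c"
abbreviation "Bg \<equiv> supnorm g"

lemma c_le: "c x \<le> Bc" using supnorm_ge[OF c_bdd, of x] c_nonneg[of x] by simp
lemma g_le: "g x \<le> Bg" using supnorm_ge[OF g_bdd, of x] g_nonneg[of x] by simp
lemma Bc_nonneg: "0 \<le> Bc" using supnorm_nonneg[OF c_bdd] .
lemma Bg_nonneg: "0 \<le> Bg" using supnorm_nonneg[OF g_bdd] .

lemma Kp: "prob_space (K x)" by (rule K_prob[OF K])
lemma Ks: "sets (K x) = sets Mstep" by (rule K_sets[OF K])
lemma Ksp: "space (K x) = {0..} \<times> UNIV" by (rule K_space[OF K])
lemma Km[measurable]: "K \<in> borel \<rightarrow>\<^sub>M subprob_algebra Mstep" by (rule K_meas[OF K])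

lemma Qk_mono: "t \<le> t' \<Longrightarrow> Qk K t B x \<le> Qk K t' B x" if "B \<in> sets borel"
proof -
  assume "t \<le> t'"
  interpret prob_space "K x" by (rule Kp)
  have "{0..t} \<times> B \<in> sets (K x)" "{0..t'} \<times> B \<in> sets (K x)"
  proof -
    show "{0..t} \<times> B \<in> sets (K x)"
    proof cases
      assume "0 \<le> t" then show ?thesis unfolding Ks by (rule Ggen_in[OF Ggen_I[OF _ that]])
    next
      assume "\<not> 0 \<le> t" then have e: "{0..t} \<times> B = {}" by auto
      show ?thesis unfolding e by simp
    qed
    show "{0..t'} \<times> B \<in> sets (K x)"
    proof cases
      assume "0 \<le> t'" then show ?thesis unfolding Ks by (rule Ggen_in[OF Ggen_I[OF _ that]])
    next
      assume "\<not> 0 \<le> t'" then have e: "{0..t'} \<times> B = {}" by auto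
      show ?thesis unfolding e by simp
    qed
  qed
  then show ?thesis unfolding Qk_def using \<open>t \<le> t'\<close> by (intro finite_measure_mono) auto
qed

lemma Qk_le_beta: "t \<le> T \<Longrightarrow> Qk K t UNIV x \<le> \<beta>"
proof -
  assume "t \<le> T"
  then have "Qk K t UNIV x \<le> Qk K T UNIV x" by (intro Qk_mono) auto
  also have "\<dots> \<le> \<beta>" unfolding betaQ_def
  proof (rule cSUP_upper)
    show "bdd_above (range (Qk K T UNIV))"
      unfolding Qk_def by (rule bdd_aboveI[where M=1]) (auto intro: prob_space.prob_le_1[OF Kp])
  qed simp
  finally show ?thesis .
qed

lemma Qk_nonneg: "0 \<le> Qk K t B x" by (simp add: Qk_def)

lemma beta_nonneg: "0 \<le> \<beta>" using Qk_le_beta[OF order.refl, of undefined] Qk_nonneg[of T UNIV undefined] by linarith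

definition Lk :: "real \<Rightarrow> 'e \<Rightarrow> real" where
  "Lk s x = (LINT t:{0..s}|lborel. 1 - Qk K t UNIV x)"

lemma Lk_eq: "Lk s x = (\<integral>p. max 0 (min (fst p) s) \<partial>K x)"
  unfolding Lk_def Qk_def by (rule Lf_eq[OF Kp Ks])

lemma Lk_meas[measurable]: "(\<lambda>(s, x). Lk s x) \<in> borel_measurable (borel \<Otimes>\<^sub>M borel)"
proof -
  have "(\<lambda>sx. \<integral>p. max 0 (min (fst p) (fst sx)) \<partial>K (snd sx)) \<in> borel_measurable (borel \<Otimes>\<^sub>M borel)"
    by (rule integral_measurable_subprob_algebra2[where N=Mstep]) measurable
  then show ?thesis by (simp add: Lk_eq case_prod_beta')
qed

lemma Lk_nonneg: "0 \<le> Lk s x"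
  unfolding Lk_eq by (rule integral_nonneg_AE) auto

definition contf :: "(real \<Rightarrow> 'e \<Rightarrow> real) \<Rightarrow> real \<Rightarrow> 'e \<Rightarrow> real" where
  "contf u s x = c x * Lk s x + (\<integral>p. indicator ({0..s} \<times> UNIV) p * u (s - fst p) (snd p) \<partial>K x)"

lemma Gop_contf: "Gop K c g u s x = min (contf u s x) (g x)"
  by (simp add: Gop_def contf_def Lk_def)

lemma bm_meas: "bm u \<Longrightarrow> (\<lambda>(s, x). u s x) \<in> borel_measurable (borel \<Otimes>\<^sub>M borel)"
  by (simp add: bm_def)

lemma bm_integrand_meas:
  assumes "bm u"
  shows "(\<lambda>(sx, p). indicator ({0..fst sx} \<times> UNIV) p * u (fst sx - fst p) (snd p))
          \<in> borel_measurable ((borel \<Otimes>\<^sub>M borel) \<Otimes>\<^sub>M Mstep)"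
proof -
  have [measurable]: "(\<lambda>(s, x). u s x) \<in> borel_measurable (borel \<Otimes>\<^sub>M borel)" using assms by (simp add: bm_def)
  have m1: "(\<lambda>z. u (fst (fst z) - fst (snd z)) (snd (snd z))) \<in> borel_measurable ((borel \<Otimes>\<^sub>M borel) \<Otimes>\<^sub>M Mstep)"
    using measurable_compose[of "\<lambda>z. (fst (fst z) - fst (snd z), snd (snd z))" "(borel \<Otimes>\<^sub>M borel) \<Otimes>\<^sub>M Mstep" "borel \<Otimes>\<^sub>M borel" "\<lambda>(s, x). u s x"]
    by (simp add: case_prod_beta') measurable
  have m2: "(\<lambda>z. indicator ({0..fst (fst z)} \<times> UNIV) (snd z) :: real) \<in> borel_measurable ((borel \<Otimes>\<^sub>M borel) \<Otimes>\<^sub>M Mstep)"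
    by (simp add: indicator_def mem_Times_iff) measurable
  show ?thesis unfolding case_prod_beta' by (rule borel_measurable_times[OF m2 m1])
qed

lemma bm_contf: "bm u \<Longrightarrow> (\<lambda>(s, x). contf u s x) \<in> borel_measurable (borel \<Otimes>\<^sub>M borel)"
proof -
  assume u: "bm u"
  have "(\<lambda>sx. \<integral>p. indicator ({0..fst sx} \<times> UNIV) p * u (fst sx - fst p) (snd p) \<partial>K (snd sx)) \<in> borel_measurable (borel \<Otimes>\<^sub>M borel)"
    by (rule integral_measurable_subprob_algebra2[where N=Mstep])
       (use bm_integrand_meas[OF u] in \<open>simp_all add: case_prod_beta'\<close>)
  then show ?thesis unfolding contf_def case_prod_beta' by measurable
qed

lemma bm_integrand_meas1:
  assumes u: "bm u"
  shows "(\<lambda>p. indicator ({0..s} \<times> UNIV) p * u (s - fst p) (snd p)) \<in> borel_measurable Mstep"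
proof -
  have mA: "(\<lambda>(sx, p). indicator ({0..fst sx} \<times> UNIV) p * u (fst sx - fst p) (snd p))
          \<in> borel_measurable ((borel \<Otimes>\<^sub>M borel) \<Otimes>\<^sub>M Mstep)" by (rule bm_integrand_meas[OF u])
  have mB: "(\<lambda>p. ((s, x), p)) \<in> Mstep \<rightarrow>\<^sub>M (borel \<Otimes>\<^sub>M borel) \<Otimes>\<^sub>M Mstep" by simp
  show ?thesis using measurable_compose[OF mB mA] by simp
qed

lemma bm_integrable:
  assumes u: "bm u"
  shows "integrable (K x) (\<lambda>p. indicator ({0..s} \<times> UNIV) p * u (s - fst p) (snd p))"
proof -
  obtain B where B: "\<And>s x. \<bar>u s x\<bar> \<le> B" using u by (auto simp: bm_def)
  have mA: "(\<lambda>(sx, p). indicator ({0..fst sx} \<times> UNIV) p * u (fst sx - fst p) (snd p))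
          \<in> borel_measurable ((borel \<Otimes>\<^sub>M borel) \<Otimes>\<^sub>M Mstep)" by (rule bm_integrand_meas[OF u])
  have mB: "(\<lambda>p. ((s, x), p)) \<in> Mstep \<rightarrow>\<^sub>M (borel \<Otimes>\<^sub>M borel) \<Otimes>\<^sub>M Mstep" by simp
  have "(\<lambda>p. indicator ({0..s} \<times> UNIV) p * u (s - fst p) (snd p)) \<in> borel_measurable Mstep"
    using measurable_compose[OF mB mA] by simp
  then have m: "(\<lambda>p. indicator ({0..s} \<times> UNIV) p * u (s - fst p) (snd p)) \<in> borel_measurable (K x)"
    by (simp add: measurable_cong_sets[OF Ks refl])
  interpret prob_space "K x" by (rule Kp)
  have B0: "0 \<le> B" using B by (meson abs_ge_zero order_trans)
  show ?thesis
  proof (rule integrable_const_bound[where B=B])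
    show "AE p in K x. norm (indicator ({0..s} \<times> UNIV) p * u (s - fst p) (snd p)) \<le> B"
      by (rule AE_I2) (simp add: indicator_def B B0)
  qed (rule m)
qed

lemma contf_diff:
  assumes "bm u" "bm v"
  shows "contf u s x - contf v s x = (\<integral>p. indicator ({0..s} \<times> UNIV) p * (u (s - fst p) (snd p) - v (s - fst p) (snd p)) \<partial>K x)"
  unfolding contf_def using bm_integrable[OF assms(1)] bm_integrable[OF assms(2)]
  by (simp add: right_diff_distrib)

lemma contf_mono:
  assumes "bm u" "bm v" and le: "\<And>r y. 0 \<le> r \<Longrightarrow> r \<le> s \<Longrightarrow> u r y \<le> v r y"
  shows "contf u s x \<le> contf v s x"
proof -
  have "contf v s x - contf u s x \<ge> 0"
    unfolding contf_diff[OF assms(2,1)]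
    by (rule integral_nonneg_AE) (use le in \<open>auto simp: indicator_def mem_Times_iff\<close>)
  then show ?thesis by simp
qed

lemma Qk_integral: "(\<integral>p. indicator ({0..s} \<times> UNIV) p * D \<partial>K x) = D * Qk K s UNIV x"
proof -
  interpret prob_space "K x" by (rule Kp)
  have "{0..s} \<times> UNIV \<in> sets (K x)" by (simp add: Ks Icc_UNIV_sets)
  then show ?thesis by (simp add: Qk_def)
qed

lemma contf_lip:
  assumes "bm u" "bm v" and s0: "0 \<le> s" and s: "s \<le> T" and le: "\<And>r y. 0 \<le> r \<Longrightarrow> r \<le> s \<Longrightarrow> \<bar>u r y - v r y\<bar> \<le> D"
  shows "\<bar>contf u s x - contf v s x\<bar> \<le> \<beta> * D"
proof -
  have D: "0 \<le> D" if "0 \<le> s" using le[of s undefined, OF that order.refl] by linarith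
  have "\<bar>contf u s x - contf v s x\<bar> \<le> (\<integral>p. indicator ({0..s} \<times> UNIV) p * D \<partial>K x)"
    unfolding contf_diff[OF assms(1,2)]
  proof (rule order.trans[OF integral_abs_bound integral_mono])
    have "integrable (K x) (\<lambda>p. indicator ({0..s} \<times> UNIV) p * (u (s - fst p) (snd p) - v (s - fst p) (snd p)))"
      using bm_integrable[OF assms(1)] bm_integrable[OF assms(2)]
      by (simp add: right_diff_distrib)
    then show "integrable (K x) (\<lambda>p. \<bar>indicator ({0..s} \<times> UNIV) p * (u (s - fst p) (snd p) - v (s - fst p) (snd p))\<bar>)"
      by (rule integrable_abs)
    interpret prob_space "K x" by (rule Kp)
    show "integrable (K x) (\<lambda>p. indicator ({0..s} \<times> UNIV) p * D)"
      using Icc_UNIV_sets[of s] by (intro integrable_mult_left integrable_real_indicator) (auto simp: Ks emeasure_eq_measure)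
    fix p assume "p \<in> space (K x)"
    show "\<bar>indicator ({0..s} \<times> UNIV) p * (u (s - fst p) (snd p) - v (s - fst p) (snd p))\<bar> \<le> indicator ({0..s} \<times> UNIV) p * D"
      using le by (auto simp: indicator_def mem_Times_iff)
  qed
  also have "\<dots> = D * Qk K s UNIV x" by (rule Qk_integral)
  also have "\<dots> \<le> \<beta> * D"
    using D[OF s0] Qk_le_beta[OF s, of x] by (simp add: mult.commute mult_left_mono)
  finally show ?thesis .
qed

end

context problem
begin

abbreviation "V n \<equiv> Vn K c g n"

lemma V0: "V 0 s x = 0" by (simp add: Vn_def)

lemma V_Suc: "V (Suc n) s x = min (contf (V n) s x) (g x)"
  by (simp add: Vn_def Gop_contf)

lemma V_props: "bm (V n) \<and> (\<forall>s x. 0 \<le> V n s x \<and> V n s x \<le> g x)"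
proof (induct n)
  case 0
  show ?case using g_nonneg by (auto simp: V0 bm_def)
next
  case (Suc n)
  then have u: "bm (V n)" and nn: "\<And>s x. 0 \<le> V n s x" and le: "\<And>s x. V n s x \<le> g x" by auto
  have cnn: "0 \<le> contf (V n) s x" for s x
    unfolding contf_def using c_nonneg Lk_nonneg nn
    by (intro add_nonneg_nonneg mult_nonneg_nonneg integral_nonneg_AE) (auto simp: indicator_def)
  have m: "(\<lambda>(s, x). V (Suc n) s x) \<in> borel_measurable (borel \<Otimes>\<^sub>M borel)"
    using bm_contf[OF u] unfolding V_Suc by (simp add: case_prod_beta') measurable
  have b: "\<bar>V (Suc n) s x\<bar> \<le> Bg" for s x
    unfolding V_Suc using cnn[of s x] g_le[of x] g_nonneg[of x] by auto
  show ?case using m b cnn g_nonneg unfolding bm_def V_Suc by auto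
qed

lemma bm_V: "bm (V n)" using V_props by blast
lemma V_nonneg: "0 \<le> V n s x" using V_props by blast
lemma V_le_g: "V n s x \<le> g x" using V_props by blast
lemma V_le_Bg: "V n s x \<le> Bg" using V_le_g g_le order_trans by blast

lemma V_at0: "V n 0 x = 0"
proof (cases n)
  case 0 then show ?thesis by (simp add: V0)
next
  case (Suc m)
  have "(\<lambda>p::real \<times> 'e. max 0 (min (fst p) 0)) = (\<lambda>_. 0)" by (auto simp: fun_eq_iff)
  then have L: "Lk 0 x = 0" unfolding Lk_eq by simp
  have I: "(\<integral>p. indicator ({0..0} \<times> UNIV) p * V m (0 - fst p) (snd p) \<partial>K x) = 0"
  proof -
    have "emeasure (K x) ({0} \<times> UNIV) = 0" by (rule K_zero[OF K])
    then have "AE p in K x. p \<notin> {0} \<times> UNIV"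
      by (intro AE_I[of _ _ "{0} \<times> UNIV"]) (auto simp: Ks Icc_UNIV_sets[of 0, simplified])
    then have "AE p in K x. indicator ({0..0} \<times> UNIV) p * V m (0 - fst p) (snd p) = (0::real)"
      by eventually_elim (auto simp: indicator_def)
    then have "(\<integral>p. indicator ({0..0} \<times> UNIV) p * V m (0 - fst p) (snd p) \<partial>K x) = (\<integral>p. 0 \<partial>K x)"
      using bm_integrand_meas1[OF bm_V, of 0 m]
      by (intro integral_cong_AE) (auto simp: measurable_cong_sets[OF Ks refl])
    then show ?thesis by simp
  qed
  show ?thesis using Suc L I g_nonneg[of x] by (simp add: V_Suc contf_def)
qed

lemma V_mono_Suc: "V n s x \<le> V (Suc n) s x"
proof (induct n arbitrary: s x)
  case 0 then show ?case by (simp add: V0 V_nonneg)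
next
  case (Suc n)
  have "contf (V n) s x \<le> contf (V (Suc n)) s x"
    by (rule contf_mono[OF bm_V bm_V]) (rule Suc)
  then show ?case by (simp add: V_Suc[of "Suc n"] V_Suc[of n] del: Vn_def) 
qed

lemma V_mono: "n \<le> m \<Longrightarrow> V n s x \<le> V m s x"
proof (induct m rule: dec_induct)
  case (step m) then show ?case using V_mono_Suc order_trans by blast
qed simp

lemma V_diff_Suc: "0 \<le> s \<Longrightarrow> s \<le> T \<Longrightarrow> \<bar>V (Suc n) s x - V n s x\<bar> \<le> \<beta> ^ n * Bg"
proof (induct n arbitrary: s x)
  case 0 then show ?case using V_nonneg V_le_Bg by (simp add: V0)
next
  case (Suc n)
  have "\<bar>contf (V (Suc n)) s x - contf (V n) s x\<bar> \<le> \<beta> * (\<beta> ^ n * Bg)"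
    by (rule contf_lip[OF bm_V bm_V Suc.prems]) (use Suc.hyps Suc.prems in auto)
  then show ?case
    by (simp add: V_Suc[of "Suc n"] V_Suc[of n])
qed

end

lemma Xt_eq:
  assumes \<omega>: "\<omega> \<in> space Omega" and t: "Sn \<omega> m \<le> t" "t < Sn \<omega> (Suc m)"
  shows "Xt \<omega> t = Xn \<omega> m"
proof -
  have "(LEAST n. t < Sn \<omega> (Suc n)) = m"
  proof (rule Least_equality)
    show "t < Sn \<omega> (Suc m)" by (rule t(2))
    fix n assume n: "t < Sn \<omega> (Suc n)"
    show "m \<le> n"
    proof (rule ccontr)
      assume "\<not> m \<le> n"
      then have "Sn \<omega> (Suc n) \<le> Sn \<omega> m" using Sn_mono[OF \<omega>] by simp
      then show False using n t(1) by linarith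
    qed
  qed
  then show ?thesis by (simp add: Xt_def)
qed

lemma Xt_meas_joint[measurable]: "(\<lambda>z. Xt (fst z) (snd z)) \<in> Omega \<Otimes>\<^sub>M borel \<rightarrow>\<^sub>M borel"
proof -
  have L: "(\<lambda>z. LEAST n. snd z < Sn (fst z) (Suc n)) \<in> Omega \<Otimes>\<^sub>M borel \<rightarrow>\<^sub>M count_space UNIV"
    by measurable
  have "(\<lambda>z. Xn (fst z) (LEAST n. snd z < Sn (fst z) (Suc n))) \<in> Omega \<Otimes>\<^sub>M borel \<rightarrow>\<^sub>M borel"
    by (rule measurable_compose_countable[OF _ L]) measurable
  then show ?thesis by (simp add: Xt_def)
qed

lemma Xt_meas_t[measurable]: "\<omega> \<in> space Omega \<Longrightarrow> (\<lambda>t. Xt \<omega> t) \<in> borel \<rightarrow>\<^sub>M borel"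
proof -
  assume \<omega>: "\<omega> \<in> space Omega"
  have "(\<lambda>t. (\<omega>, t)) \<in> borel \<rightarrow>\<^sub>M Omega \<Otimes>\<^sub>M borel" using \<omega> by simp
  from measurable_compose[OF this Xt_meas_joint] show ?thesis by simp
qed

lemma fin_Icc: "emeasure lborel {a..b::real} < top"
  by (simp add: emeasure_lborel_Icc_eq)

lemma fin_Ioc: "emeasure lborel {a<..b::real} < top"
proof -
  have "emeasure lborel {a<..b} \<le> emeasure lborel {a..b}" by (rule emeasure_mono) auto
  then show ?thesis using fin_Icc[of a b] by (simp add: order_le_less_trans)
qed

context problem
begin

definition LI :: "'e omega \<Rightarrow> real \<Rightarrow> real" where
  "LI \<omega> a = (LINT t:{0..a}|lborel. c (Xt \<omega> t))"

definition Cc :: "real \<Rightarrow> 'e omega \<Rightarrow> nat \<Rightarrow> real" where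
  "Cc s \<omega> j = c (Xn \<omega> j) * (min (Sn \<omega> (Suc j)) s - min (Sn \<omega> j) s)"

lemma cXt_meas: "\<omega> \<in> space Omega \<Longrightarrow> (\<lambda>t. c (Xt \<omega> t)) \<in> borel_measurable lborel"
  by (simp add: measurable_cong_sets[OF sets_lborel refl])

lemma cXt_set_integrable:
  assumes \<omega>: "\<omega> \<in> space Omega" and A: "A \<in> sets borel" "emeasure lborel A < \<infinity>"
  shows "set_integrable lborel A (\<lambda>t. c (Xt \<omega> t))"
  unfolding set_integrable_def
  by (rule integrableI_bounded_set_indicator[where B=Bc])
     (use A cXt_meas[OF \<omega>] c_le c_nonneg in auto)

lemma LI_split:
  assumes \<omega>: "\<omega> \<in> space Omega" and ab: "0 \<le> a" "a \<le> b"
  shows "LI \<omega> b = LI \<omega> a + (LINT t:{a<..b}|lborel. c (Xt \<omega> t))"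
proof -
  have "{0..b} = {0..a} \<union> {a<..b}" using ab by auto
  then have "LI \<omega> b = (LINT t:{0..a} \<union> {a<..b}|lborel. c (Xt \<omega> t))" by (simp add: LI_def)
  also have "\<dots> = LI \<omega> a + (LINT t:{a<..b}|lborel. c (Xt \<omega> t))"
    unfolding LI_def
    by (rule set_integral_Un) (auto intro!: cXt_set_integrable[OF \<omega>] simp: fin_Ioc fin_Icc)
  finally show ?thesis .
qed

lemma LI_piece_bounds:
  assumes \<omega>: "\<omega> \<in> space Omega" and ab: "a \<le> b"
  shows "0 \<le> (LINT t:{a<..b}|lborel. c (Xt \<omega> t))" "(LINT t:{a<..b}|lborel. c (Xt \<omega> t)) \<le> Bc * (b - a)"
proof -
  have si: "set_integrable lborel {a<..b} (\<lambda>t. c (Xt \<omega> t))"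
    by (rule cXt_set_integrable[OF \<omega>]) (auto simp: fin_Ioc)
  show "0 \<le> (LINT t:{a<..b}|lborel. c (Xt \<omega> t))"
    unfolding set_lebesgue_integral_def by (rule integral_nonneg_AE) (auto simp: c_nonneg)
  have "(LINT t:{a<..b}|lborel. c (Xt \<omega> t)) \<le> (LINT t:{a<..b}|lborel. Bc)"
    by (rule set_integral_mono[OF si]) (auto simp: c_le set_integrable_def fin_Ioc intro!: integrable_mult_left integrable_real_indicator)
  also have "\<dots> = Bc * (b - a)" using ab by (simp add: set_integral_const)
  finally show "(LINT t:{a<..b}|lborel. c (Xt \<omega> t)) \<le> Bc * (b - a)" .
qed

lemma LI_mono:
  assumes \<omega>: "\<omega> \<in> space Omega" and ab: "0 \<le> a" "a \<le> b"
  shows "LI \<omega> a \<le> LI \<omega> b" "LI \<omega> b \<le> LI \<omega> a + Bc * (b - a)"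
  using LI_split[OF assms] LI_piece_bounds[OF \<omega> ab(2)] by auto

lemma LI_nonneg: "\<omega> \<in> space Omega \<Longrightarrow> 0 \<le> a \<Longrightarrow> 0 \<le> LI \<omega> a"
  unfolding LI_def set_lebesgue_integral_def by (rule integral_nonneg_AE) (auto simp: c_nonneg)

lemma LI0: "LI \<omega> 0 = 0"
proof -
  have "(\<integral>t. indicator {0..0::real} t *\<^sub>R c (Xt \<omega> t) \<partial>lborel) = 0"
  proof (rule integral_eq_zero_AE)
    show "AE t in lborel. indicator {0..0::real} t *\<^sub>R c (Xt \<omega> t) = 0"
      using AE_lborel_singleton[of 0] by eventually_elim (auto simp: indicator_def)
  qed
  then show ?thesis by (simp add: LI_def set_lebesgue_integral_def)
qed

lemma LI_le: "\<omega> \<in> space Omega \<Longrightarrow> 0 \<le> a \<Longrightarrow> LI \<omega> a \<le> Bc * a"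
  using LI_mono(2)[of \<omega> 0 a] by (simp add: LI0)

lemma LI_sum:
  assumes \<omega>: "\<omega> \<in> space Omega" and s: "0 \<le> s"
  shows "LI \<omega> (min (Sn \<omega> m) s) = (\<Sum>j<m. Cc s \<omega> j)"
proof (induct m)
  case 0 then show ?case using s by (simp add: LI0 Sn_alt)
next
  case (Suc m)
  define a where "a = min (Sn \<omega> m) s"
  define b where "b = min (Sn \<omega> (Suc m)) s"
  have a0: "0 \<le> a" using Sn_nonneg[OF \<omega>] s by (simp add: a_def)
  have ab: "a \<le> b" using Sn_mono[OF \<omega>, of m "Suc m"] by (auto simp: a_def b_def)
  have piece: "(LINT t:{a<..b}|lborel. c (Xt \<omega> t)) = Cc s \<omega> m"
  proof cases
    assume "a = b" then show ?thesis by (simp add: Cc_def a_def b_def set_lebesgue_integral_def)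
  next
    assume "a \<noteq> b"
    then have alt: "a < b" using ab by simp
    then have aS: "a = Sn \<omega> m" and bS: "b \<le> Sn \<omega> (Suc m)"
      by (auto simp: a_def b_def min_def split: if_splits)
    have "(LINT t:{a<..b}|lborel. c (Xt \<omega> t)) = (LINT t:{a<..b}|lborel. c (Xn \<omega> m))"
    proof (rule set_lebesgue_integral_cong_AE)
      show "(\<lambda>t. c (Xt \<omega> t)) \<in> borel_measurable lborel" by (rule cXt_meas[OF \<omega>])
      show "AE t\<in>{a<..b} in lborel. c (Xt \<omega> t) = c (Xn \<omega> m)"
        using AE_lborel_singleton[of b]
      proof eventually_elim
        case (elim t)
        show ?case
        proof
          assume "t \<in> {a<..b}"
          then have "Sn \<omega> m \<le> t" "t < Sn \<omega> (Suc m)" using elim aS bS by auto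
          then show "c (Xt \<omega> t) = c (Xn \<omega> m)" by (simp add: Xt_eq[OF \<omega>])
        qed
      qed
    qed auto
    also have "\<dots> = c (Xn \<omega> m) * (b - a)" using ab by (simp add: set_integral_const)
    finally show ?thesis by (simp add: Cc_def a_def b_def)
  qed
  have "LI \<omega> b = LI \<omega> a + Cc s \<omega> m" using LI_split[OF \<omega> a0 ab] piece by simp
  then show ?case using Suc by (simp add: a_def b_def)
qed

end

lemma Fn_mono:
  assumes jm: "j \<le> m" shows "sets (Fn j :: 'e::polish_space omega measure) \<subseteq> sets (Fn m)"
proof
  fix A :: "'e omega set" assume "A \<in> sets (Fn j)"
  then obtain a where a: "a \<in> sets (Ysp j)" and A: "A = Yn j -` a \<inter> space Omega"
    unfolding sets_Fn by blast
  define pr where "pr y = (fst y, restrict (snd y) {..<j})" for y :: "'e \<times> (nat \<Rightarrow> real \<times> 'e)"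
  have pr: "pr \<in> Ysp m \<rightarrow>\<^sub>M Ysp j"
    unfolding pr_def Ysp_def
    by (intro measurable_Pair measurable_compose[OF measurable_fst] measurable_compose[OF measurable_snd measurable_restrict_subset])
       (use jm in auto)
  have YY: "Yn j \<omega> = pr (Yn m \<omega>)" for \<omega>
    using jm by (auto simp: Yn_def pr_def restrict_restrict Int_absorb2)
  have "A = Yn m -` (pr -` a \<inter> space (Ysp m)) \<inter> space Omega"
    using measurable_space[OF meas_Yn] by (auto simp: A YY)
  moreover have "pr -` a \<inter> space (Ysp m) \<in> sets (Ysp m)" using pr a by (rule measurable_sets)
  ultimately show "A \<in> sets (Fn m)" unfolding sets_Fn by blast
qed

lemma enat_le_iff: "(e \<le> enat m) = (\<exists>j\<le>m. e = enat j)"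
  by (cases e) auto

lemma st_eq_Fn: "is_stopping_time \<sigma> \<Longrightarrow> {\<omega> \<in> space Omega. \<sigma> \<omega> = enat n} \<in> sets (Fn n)"
  by (simp add: is_stopping_time_def)

lemma st_eq_Omega: "is_stopping_time \<sigma> \<Longrightarrow> {\<omega> \<in> space Omega. \<sigma> \<omega> = enat n} \<in> sets Omega"
  using st_eq_Fn sets_Fn_sub by blast

lemma st_gt_Fn:
  assumes \<sigma>: "is_stopping_time \<sigma>"
  shows "{\<omega> \<in> space Omega. enat m < \<sigma> \<omega>} \<in> sets (Fn m)"
proof -
  have "{\<omega> \<in> space Omega. enat m < \<sigma> \<omega>} = space Omega - (\<Union>j\<in>{..m}. {\<omega> \<in> space Omega. \<sigma> \<omega> = enat j})"
  proof -
    have "enat m < \<sigma> \<omega> \<longleftrightarrow> \<not>(\<exists>j\<le>m. \<sigma> \<omega> = enat j)" for \<omega>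
      using enat_le_iff[of "\<sigma> \<omega>" m] by (auto simp: not_less)
    then show ?thesis by auto
  qed
  also have "\<dots> \<in> sets (Fn m)"
  proof (rule sets.Diff)
    show "space Omega \<in> sets (Fn m)" by (rule space_Fn)
    show "(\<Union>j\<in>{..m}. {\<omega> \<in> space Omega. \<sigma> \<omega> = enat j}) \<in> sets (Fn m)"
      using st_eq_Fn[OF \<sigma>] Fn_mono by (intro sets.finite_UN) auto
  qed
  finally show ?thesis .
qed

lemma st_meas:
  assumes \<sigma>: "is_stopping_time \<sigma>"
  shows "\<sigma> \<in> Omega \<rightarrow>\<^sub>M count_space UNIV"
proof -
  have "\<forall>a\<in>UNIV. \<sigma> -` {a} \<inter> space Omega \<in> sets Omega"
  proof
    fix a :: enat
    show "\<sigma> -` {a} \<inter> space Omega \<in> sets Omega"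
    proof (cases a)
      case (enat n)
      have "\<sigma> -` {a} \<inter> space Omega = {\<omega> \<in> space Omega. \<sigma> \<omega> = enat n}" using enat by auto
      then show ?thesis using st_eq_Omega[OF \<sigma>] by simp
    next
      case infinity
      have "(\<sigma> \<omega> = \<infinity>) = (\<forall>n. \<sigma> \<omega> \<noteq> enat n)" for \<omega> by (cases "\<sigma> \<omega>") auto
      then have "\<sigma> -` {a} \<inter> space Omega = space Omega - (\<Union>n. {\<omega> \<in> space Omega. \<sigma> \<omega> = enat n})"
        using infinity by auto
      then show ?thesis using st_eq_Omega[OF \<sigma>] by auto
    qed
  qed
  then show ?thesis by (subst measurable_count_space_eq_countable) auto
qed

lemma Sinf_meas[measurable]: "Sinf \<in> borel_measurable Omega"
  unfolding Sinf_def by measurable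

lemma Stau_meas:
  assumes \<sigma>: "is_stopping_time \<sigma>"
  shows "Stau \<sigma> \<in> borel_measurable Omega"
proof -
  have m1: "(\<lambda>\<omega>. the_enat (\<sigma> \<omega>)) \<in> Omega \<rightarrow>\<^sub>M count_space UNIV"
    by (rule measurable_compose[OF st_meas[OF \<sigma>] measurable_count_space])
  have m2: "(\<lambda>\<omega>. Sn \<omega> (the_enat (\<sigma> \<omega>))) \<in> borel_measurable Omega"
    by (rule measurable_compose_countable[OF _ m1]) simp
  have m3: "(\<lambda>\<omega>. \<sigma> \<omega> = \<infinity>) \<in> Omega \<rightarrow>\<^sub>M count_space UNIV"
    by (rule measurable_compose[OF st_meas[OF \<sigma>] measurable_count_space])
  have "(\<lambda>\<omega>. if \<sigma> \<omega> = \<infinity> then Sinf \<omega> else ereal (Sn \<omega> (the_enat (\<sigma> \<omega>)))) \<in> borel_measurable Omega"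
    using m2 m3 by measurable
  moreover have "Stau \<sigma> = (\<lambda>\<omega>. if \<sigma> \<omega> = \<infinity> then Sinf \<omega> else ereal (Sn \<omega> (the_enat (\<sigma> \<omega>))))"
  proof
    fix \<omega> show "Stau \<sigma> \<omega> = (if \<sigma> \<omega> = \<infinity> then Sinf \<omega> else ereal (Sn \<omega> (the_enat (\<sigma> \<omega>))))"
      by (cases "\<sigma> \<omega>") (auto simp: Stau_def)
  qed
  ultimately show ?thesis by simp
qed

lemma Sinf_ge: "Sinf \<omega> \<ge> ereal (Sn \<omega> n)"
  unfolding Sinf_def by (rule SUP_upper) simp

lemma Stau_nonneg: "\<omega> \<in> space Omega \<Longrightarrow> 0 \<le> Stau \<sigma> \<omega>"
proof -
  assume \<omega>: "\<omega> \<in> space Omega"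
  show ?thesis
  proof (cases "\<sigma> \<omega>")
    case (enat n) then show ?thesis using Sn_nonneg[OF \<omega>] by (simp add: Stau_def)
  next
    case infinity
    have "0 \<le> Sinf \<omega>" using order_trans[OF _ Sinf_ge[of \<omega> 0]] Sn_nonneg[OF \<omega>, of 0] by simp
    then show ?thesis using infinity by (simp add: Stau_def)
  qed
qed

lemma LINT_meas:
  fixes f :: "'e::polish_space omega \<Rightarrow> real \<Rightarrow> real"
  assumes a[measurable]: "a \<in> borel_measurable Omega"
    and f[measurable]: "(\<lambda>z. f (fst z) (snd z)) \<in> borel_measurable (Omega \<Otimes>\<^sub>M borel)"
  shows "(\<lambda>\<omega>. LINT t:{0..a \<omega>}|lborel. f \<omega> t) \<in> borel_measurable Omega"
proof -
  have "(\<lambda>(\<omega>, t). indicator {0..a \<omega>} t *\<^sub>R f \<omega> t) \<in> borel_measurable (Omega \<Otimes>\<^sub>M borel)"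
  proof -
    have "(\<lambda>z. indicator {0..a (fst z)} (snd z) * f (fst z) (snd z)) \<in> borel_measurable (Omega \<Otimes>\<^sub>M borel)"
      by (simp add: indicator_def) measurable
    then show ?thesis by (simp add: case_prod_beta')
  qed
  then have "(\<lambda>(\<omega>, t). indicator {0..a \<omega>} t *\<^sub>R f \<omega> t) \<in> borel_measurable (Omega \<Otimes>\<^sub>M lborel)"
    by (simp add: measurable_cong_sets[OF sets_pair_measure_cong[OF refl sets_lborel] refl])
  then show ?thesis
    unfolding set_lebesgue_integral_def by (rule lborel.borel_measurable_lebesgue_integral)
qed

context problem
begin

lemma cXt_joint[measurable]: "(\<lambda>z. c (Xt (fst z) (snd z))) \<in> borel_measurable (Omega \<Otimes>\<^sub>M borel)"
  by measurable

lemma Rcost_meas: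
  assumes \<sigma>: "is_stopping_time \<sigma>"
  shows "Rcost c g s \<sigma> \<in> borel_measurable Omega"
proof -
  note Stau_meas[OF \<sigma>, measurable]
  have a[measurable]: "(\<lambda>\<omega>. real_of_ereal (Stau \<sigma> \<omega>)) \<in> borel_measurable Omega" by measurable
  have L1: "(\<lambda>\<omega>. LINT t:{0..real_of_ereal (Stau \<sigma> \<omega>)}|lborel. c (Xt \<omega> t)) \<in> borel_measurable Omega"
    by (rule LINT_meas[OF a]) simp
  have L2: "(\<lambda>\<omega>. LINT t:{0..s}|lborel. c (Xt \<omega> t)) \<in> borel_measurable Omega"
    by (rule LINT_meas) simp_all
  have G: "(\<lambda>\<omega>. g (Xt \<omega> (real_of_ereal (Stau \<sigma> \<omega>)))) \<in> borel_measurable Omega"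
  proof -
    have "(\<lambda>\<omega>. (\<omega>, real_of_ereal (Stau \<sigma> \<omega>))) \<in> Omega \<rightarrow>\<^sub>M Omega \<Otimes>\<^sub>M borel" by measurable
    from measurable_compose[OF measurable_compose[OF this Xt_meas_joint] g_meas] show ?thesis by simp
  qed
  show ?thesis unfolding Rcost_def[abs_def] using L1 L2 G by measurable
qed

lemma Rcost_bounds:
  assumes \<omega>: "\<omega> \<in> space Omega" and s: "0 \<le> s"
  shows "0 \<le> Rcost c g s \<sigma> \<omega>" "Rcost c g s \<sigma> \<omega> \<le> Bc * s + Bg"
proof -
  have St: "0 \<le> Stau \<sigma> \<omega>" by (rule Stau_nonneg[OF \<omega>])
  show "0 \<le> Rcost c g s \<sigma> \<omega>"
    using St LI_nonneg[OF \<omega>] g_nonneg s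
    by (auto simp: Rcost_def LI_def[symmetric] real_of_ereal_pos intro!: add_nonneg_nonneg)
  show "Rcost c g s \<sigma> \<omega> \<le> Bc * s + Bg"
  proof (cases "Stau \<sigma> \<omega> < ereal s")
    case True
    define a where "a = real_of_ereal (Stau \<sigma> \<omega>)"
    have fin: "\<bar>Stau \<sigma> \<omega>\<bar> \<noteq> \<infinity>" using True St by auto
    have "Stau \<sigma> \<omega> = ereal a" unfolding a_def using fin by (simp add: ereal_real)
    then have a0: "0 \<le> a" and as: "a < s" using St True by auto
    have "LI \<omega> a \<le> Bc * s" using LI_le[OF \<omega> a0] Bc_nonneg as by (meson less_eq_real_def mult_left_mono order_trans)
    then show ?thesis using True g_le by (simp add: Rcost_def LI_def[symmetric] a_def[symmetric] add_mono)
  next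
    case False
    then show ?thesis using LI_le[OF \<omega> s] Bg_nonneg by (simp add: Rcost_def LI_def[symmetric])
  qed
qed

end

lemma yS_nonneg: "y \<in> space (Ysp m) \<Longrightarrow> 0 \<le> yS m y"
  unfolding yS_def Ysp_def
  by (intro sum_nonneg) (auto simp: space_pair_measure space_PiM space_Mstep PiE_def Pi_def mem_Times_iff)

lemma bm_comp:
  assumes U: "bm U" and a: "a \<in> borel_measurable M" and b: "b \<in> M \<rightarrow>\<^sub>M borel"
  shows "(\<lambda>z. U (a z) (b z)) \<in> borel_measurable M"
proof -
  have "(\<lambda>z. (a z, b z)) \<in> M \<rightarrow>\<^sub>M borel \<Otimes>\<^sub>M borel" using a b by measurable
  moreover have "(\<lambda>(s, x). U s x) \<in> borel_measurable (borel \<Otimes>\<^sub>M borel)" using U by (simp add: bm_def)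
  ultimately show ?thesis using measurable_compose by fastforce
qed

locale full = problem K c g T + setting K x0 P
  for K :: "'e::polish_space \<Rightarrow> (real \<times> 'e) measure" and c g T x0 P
begin

lemma intP:
  assumes f: "f \<in> borel_measurable Omega" and b: "\<And>\<omega>. \<omega> \<in> space Omega \<Longrightarrow> \<bar>f \<omega>\<bar> \<le> (B::real)"
  shows "integrable P f"
  by (rule integrable_const_bound[where B=B]) (use f b in \<open>auto simp: borel_P_cong space_P intro!: AE_I2\<close>)

lemma AE_X0: "AE \<omega> in P. Xn \<omega> 0 = x0"
proof -
  have "measure P {\<omega> \<in> space Omega. Xn \<omega> 0 = x0} = 1" using PM by (simp add: path_measure_def)
  moreover have "{\<omega> \<in> space P. Xn \<omega> 0 = x0} \<in> sets P" by (simp add: sets_P space_P)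
  ultimately show ?thesis using prob_Collect_eq_1 by (simp add: space_P)
qed

lemma AE_Tpos: "AE \<omega> in P. \<forall>j. 0 < Tn \<omega> (Suc j)"
proof (subst AE_all_countable, intro allI)
  fix j
  have Q0: "Qk K 0 UNIV x = 0" for x
    using K_zero[OF K, of x] by (simp add: Qk_def measure_def)
  have "measure P {\<omega> \<in> space Omega. Tn \<omega> (Suc j) \<le> 0 \<and> Xn \<omega> (Suc j) \<in> UNIV}
          = (\<integral>\<omega>. indicator (space Omega) \<omega> * Qk K 0 UNIV (Xn \<omega> j) \<partial>P)"
    by (rule path_prop[OF space_Fn]) auto
  also have "\<dots> = 0" by (simp add: Q0)
  finally have "measure P {\<omega> \<in> space P. Tn \<omega> (Suc j) \<le> 0} = 0" by (simp add: space_P)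
  moreover have "{\<omega> \<in> space P. Tn \<omega> (Suc j) \<le> 0} \<in> sets P" by (simp add: sets_P space_P)
  ultimately have "AE \<omega> in P. \<not> Tn \<omega> (Suc j) \<le> 0" using prob_Collect_eq_0 by simp
  then show "AE \<omega> in P. 0 < Tn \<omega> (Suc j)" by (simp add: not_le)
qed

lemma Cc_bounds: "\<omega> \<in> space Omega \<Longrightarrow> 0 \<le> Cc T \<omega> j \<and> Cc T \<omega> j \<le> Bc * T"
proof -
  assume \<omega>: "\<omega> \<in> space Omega"
  define d where "d = min (Sn \<omega> (Suc j)) T - min (Sn \<omega> j) T"
  have d: "0 \<le> d" "d \<le> T" using Sn_mono[OF \<omega>, of j "Suc j"] Sn_nonneg[OF \<omega>, of j] T
    by (auto simp: d_def min_def)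
  show ?thesis using d c_nonneg c_le Bc_nonneg unfolding Cc_def d_def[symmetric] by (auto intro: mult_mono)
qed

definition cterm :: "('e omega \<Rightarrow> enat) \<Rightarrow> nat \<Rightarrow> 'e omega \<Rightarrow> real" where
  "cterm \<sigma> m \<omega> = (\<Sum>j<m. if enat j < \<sigma> \<omega> then Cc T \<omega> j else 0)"

definition gterm :: "('e omega \<Rightarrow> enat) \<Rightarrow> nat \<Rightarrow> 'e omega \<Rightarrow> real" where
  "gterm \<sigma> m \<omega> = (\<Sum>j<m. if \<sigma> \<omega> = enat j \<and> Sn \<omega> j < T then g (Xn \<omega> j) else 0)"

definition uterm :: "(real \<Rightarrow> 'e \<Rightarrow> real) \<Rightarrow> ('e omega \<Rightarrow> enat) \<Rightarrow> nat \<Rightarrow> 'e omega \<Rightarrow> real" where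
  "uterm U \<sigma> m \<omega> = (if enat m \<le> \<sigma> \<omega> \<and> Sn \<omega> m < T then U (T - Sn \<omega> m) (Xn \<omega> m) else 0)"

definition Zf :: "(real \<Rightarrow> 'e \<Rightarrow> real) \<Rightarrow> ('e omega \<Rightarrow> enat) \<Rightarrow> nat \<Rightarrow> 'e omega \<Rightarrow> real" where
  "Zf U \<sigma> m \<omega> = cterm \<sigma> m \<omega> + gterm \<sigma> m \<omega> + uterm U \<sigma> m \<omega>"

definition hfun :: "(real \<Rightarrow> 'e \<Rightarrow> real) \<Rightarrow> nat \<Rightarrow> ('e \<times> (nat \<Rightarrow> real \<times> 'e)) \<times> (real \<times> 'e) \<Rightarrow> real" where
  "hfun U m z = c (yX m (fst z)) * (min (yS m (fst z) + fst (snd z)) T - min (yS m (fst z)) T)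
     + (if yS m (fst z) + fst (snd z) < T then U (T - yS m (fst z) - fst (snd z)) (snd (snd z)) else 0)"

definition Hc :: "(real \<Rightarrow> 'e \<Rightarrow> real) \<Rightarrow> nat \<Rightarrow> 'e omega \<Rightarrow> real" where
  "Hc U m \<omega> = (\<integral>p. hfun U m (Yn m \<omega>, p) \<partial>K (Xn \<omega> m))"

definition Wf :: "(real \<Rightarrow> 'e \<Rightarrow> real) \<Rightarrow> ('e omega \<Rightarrow> enat) \<Rightarrow> nat \<Rightarrow> 'e omega \<Rightarrow> real" where
  "Wf U \<sigma> m \<omega> = cterm \<sigma> m \<omega> + gterm \<sigma> (Suc m) \<omega> + (if enat m < \<sigma> \<omega> then Hc U m \<omega> else 0)"

lemma cterm_bounds: "\<omega> \<in> space Omega \<Longrightarrow> 0 \<le> cterm \<sigma> m \<omega> \<and> cterm \<sigma> m \<omega> \<le> real m * (Bc * T)"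
proof -
  assume \<omega>: "\<omega> \<in> space Omega"
  have "0 \<le> cterm \<sigma> m \<omega>" unfolding cterm_def using Cc_bounds[OF \<omega>] by (intro sum_nonneg) auto
  moreover have "cterm \<sigma> m \<omega> \<le> (\<Sum>j<m. Bc * T)" unfolding cterm_def
    using Cc_bounds[OF \<omega>] Bc_nonneg T by (intro sum_mono) auto
  ultimately show ?thesis by simp
qed

lemma gterm_bounds: "\<omega> \<in> space Omega \<Longrightarrow> 0 \<le> gterm \<sigma> m \<omega> \<and> gterm \<sigma> m \<omega> \<le> real m * Bg"
proof -
  assume \<omega>: "\<omega> \<in> space Omega"
  have "0 \<le> gterm \<sigma> m \<omega>" unfolding gterm_def using g_nonneg by (intro sum_nonneg) auto
  moreover have "gterm \<sigma> m \<omega> \<le> (\<Sum>j<m. Bg)" unfolding gterm_def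
    using g_le Bg_nonneg by (intro sum_mono) auto
  ultimately show ?thesis by simp
qed

lemma st_pred: "is_stopping_time \<sigma> \<Longrightarrow> (\<lambda>\<omega>. F (\<sigma> \<omega>)) \<in> Omega \<rightarrow>\<^sub>M count_space UNIV"
  by (rule measurable_compose[OF st_meas measurable_count_space])

lemma Cc_meas[measurable]: "(\<lambda>\<omega>. Cc T \<omega> j) \<in> borel_measurable Omega"
  unfolding Cc_def by measurable

lemma cterm_meas: "is_stopping_time \<sigma> \<Longrightarrow> cterm \<sigma> m \<in> borel_measurable Omega"
  unfolding cterm_def[abs_def] using st_pred[of \<sigma> "\<lambda>e. enat _ < e"] by measurable

lemma gterm_meas: "is_stopping_time \<sigma> \<Longrightarrow> gterm \<sigma> m \<in> borel_measurable Omega"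
  unfolding gterm_def[abs_def] using st_pred[of \<sigma> "\<lambda>e. e = enat _"] by measurable

lemma uterm_meas: "is_stopping_time \<sigma> \<Longrightarrow> bm U \<Longrightarrow> uterm U \<sigma> m \<in> borel_measurable Omega"
proof -
  assume \<sigma>: "is_stopping_time \<sigma>" and U: "bm U"
  have [measurable]: "(\<lambda>\<omega>. U (T - Sn \<omega> m) (Xn \<omega> m)) \<in> borel_measurable Omega"
    by (rule bm_comp[OF U]) measurable
  show ?thesis unfolding uterm_def[abs_def] using st_pred[OF \<sigma>, of "\<lambda>e. enat m \<le> e"] by measurable
qed

lemma hfun_meas: "bm U \<Longrightarrow> hfun U m \<in> borel_measurable (Ysp m \<Otimes>\<^sub>M Mstep)"
proof -
  assume U: "bm U"
  have [measurable]: "(\<lambda>z. yX m (fst z)) \<in> borel_measurable (Ysp m \<Otimes>\<^sub>M Mstep)"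
    by (rule measurable_compose[OF measurable_fst meas_yX]) simp
  have [measurable]: "(\<lambda>z. yS m (fst z)) \<in> borel_measurable (Ysp m \<Otimes>\<^sub>M Mstep)"
    by (rule measurable_compose[OF measurable_fst meas_yS]) simp
  have [measurable]: "(\<lambda>z. fst (snd z)) \<in> borel_measurable (Ysp m \<Otimes>\<^sub>M Mstep)"
    by (rule measurable_compose[OF measurable_snd meas_Mstep_fst])
  have [measurable]: "(\<lambda>z. snd (snd z)) \<in> borel_measurable (Ysp m \<Otimes>\<^sub>M Mstep)"
    by (rule measurable_compose[OF measurable_snd meas_Mstep_snd])
  have [measurable]: "(\<lambda>z. U (T - yS m (fst z) - fst (snd z)) (snd (snd z))) \<in> borel_measurable (Ysp m \<Otimes>\<^sub>M Mstep)"
    by (rule bm_comp[OF U]) measurable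
  show ?thesis unfolding hfun_def[abs_def] by measurable
qed

lemma Hc_meas: "bm U \<Longrightarrow> Hc U m \<in> borel_measurable Omega"
proof -
  assume U: "bm U"
  note hm[measurable] = hfun_meas[OF U, of m]
  have "(\<lambda>(\<omega>, p). hfun U m (Yn m \<omega>, p)) \<in> borel_measurable (Omega \<Otimes>\<^sub>M Mstep)" by measurable
  then show ?thesis unfolding Hc_def[abs_def]
    by (intro integral_measurable_subprob_algebra2[where N=Mstep]) (auto intro: measurable_compose[OF meas_Xn K_meas[OF K]])
qed

lemma hfun_bounds:
  assumes z: "z \<in> space (Ysp m \<Otimes>\<^sub>M Mstep)" and U0: "\<And>s x. 0 \<le> U s x" and UB: "\<And>s x. U s x \<le> BU"
  shows "0 \<le> hfun U m z \<and> hfun U m z \<le> Bc * T + BU"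
proof -
  have y: "0 \<le> yS m (fst z)" using z by (intro yS_nonneg) (auto simp: space_pair_measure)
  have p: "0 \<le> fst (snd z)" using z by (auto simp: space_pair_measure space_Mstep mem_Times_iff)
  define d where "d = min (yS m (fst z) + fst (snd z)) T - min (yS m (fst z)) T"
  have d: "0 \<le> d" "d \<le> T" using y p T by (auto simp: d_def min_def)
  have c1: "0 \<le> c (yX m (fst z)) * d" "c (yX m (fst z)) * d \<le> Bc * T"
    using d c_nonneg c_le Bc_nonneg by (auto intro: mult_mono)
  have BU0: "0 \<le> BU" using U0 UB by (meson order_trans)
  show ?thesis using c1 U0 UB BU0 unfolding hfun_def d_def[symmetric] by (auto intro: add_mono add_nonneg_nonneg)
qed

lemma Hc_bounds:
  assumes \<omega>: "\<omega> \<in> space Omega" and U: "bm U" and U0: "\<And>s x. 0 \<le> U s x" and UB: "\<And>s x. U s x \<le> BU"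
  shows "0 \<le> Hc U m \<omega> \<and> Hc U m \<omega> \<le> Bc * T + BU"
proof -
  interpret Kp: prob_space "K (Xn \<omega> m)" by (rule Kp)
  have BU0: "0 \<le> BU" using U0 UB by (meson order_trans)
  have Ym: "Yn m \<omega> \<in> space (Ysp m)" using measurable_space[OF meas_Yn, of \<omega> m] \<omega> by simp
  have hb: "0 \<le> hfun U m (Yn m \<omega>, p) \<and> hfun U m (Yn m \<omega>, p) \<le> Bc * T + BU" if "p \<in> space (K (Xn \<omega> m))" for p
    by (rule hfun_bounds[OF _ U0 UB]) (use Ym that Ksp in \<open>auto simp: space_pair_measure space_Mstep\<close>)
  have mp: "(\<lambda>p. (Yn m \<omega>, p)) \<in> K (Xn \<omega> m) \<rightarrow>\<^sub>M Ysp m \<Otimes>\<^sub>M Mstep"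
    using Ym by (simp add: measurable_cong_sets[OF Ks refl])
  have mh: "(\<lambda>p. hfun U m (Yn m \<omega>, p)) \<in> borel_measurable (K (Xn \<omega> m))"
    using measurable_compose[OF mp hfun_meas[OF U]] by simp
  have "0 \<le> Hc U m \<omega>" unfolding Hc_def using hb by (intro integral_nonneg_AE AE_I2) auto
  moreover have "Hc U m \<omega> \<le> (\<integral>p. Bc * T + BU \<partial>K (Xn \<omega> m))" unfolding Hc_def
    using hb mh BU0 Bc_nonneg T by (intro integral_mono Kp.integrable_const_bound[where B="Bc * T + BU"] AE_I2) auto
  ultimately show ?thesis by (simp add: Kp.prob_space)
qed

lemma step_eq:
  assumes \<sigma>: "is_stopping_time \<sigma>" and U: "bm U" and U0: "\<And>s x. 0 \<le> U s x" and UB: "\<And>s x. U s x \<le> BU"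
  shows "(\<integral>\<omega>. Zf U \<sigma> (Suc m) \<omega> \<partial>P) = (\<integral>\<omega>. Wf U \<sigma> m \<omega> \<partial>P)"
proof -
  have BU0: "0 \<le> Bc * T + BU" using U0 UB mult_nonneg_nonneg[OF Bc_nonneg T] by (meson add_nonneg_nonneg order_trans)
  define A where "A = {\<omega> \<in> space Omega. enat m < \<sigma> \<omega>}"
  have A: "A \<in> sets (Fn m)" unfolding A_def by (rule st_gt_Fn[OF \<sigma>])
  have AO: "A \<in> sets Omega" using A sets_Fn_sub by blast
  have ct: "cterm \<sigma> (Suc m) \<omega> = cterm \<sigma> m \<omega> + (if enat m < \<sigma> \<omega> then Cc T \<omega> m else 0)" for \<omega>
    by (simp add: cterm_def)
  have pw: "Zf U \<sigma> (Suc m) \<omega> = (cterm \<sigma> m \<omega> + gterm \<sigma> (Suc m) \<omega>) + indicator A \<omega> * hfun U m (Yn m \<omega>, snd \<omega> m)"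
    if \<omega>: "\<omega> \<in> space Omega" for \<omega>
  proof -
    have h: "hfun U m (Yn m \<omega>, snd \<omega> m) = Cc T \<omega> m +
        (if Sn \<omega> (Suc m) < T then U (T - Sn \<omega> (Suc m)) (Xn \<omega> (Suc m)) else 0)"
      by (simp add: hfun_def Cc_def Xn_Y[of m m] Sn_Y[of m m] Sn_Suc Xn_Suc diff_diff_eq)
    show ?thesis
      unfolding Zf_def ct uterm_def h using \<omega> by (auto simp: A_def Suc_ile_eq)
  qed
  have pw2: "Wf U \<sigma> m \<omega> = (cterm \<sigma> m \<omega> + gterm \<sigma> (Suc m) \<omega>) + indicator A \<omega> * Hc U m \<omega>"
    if \<omega>: "\<omega> \<in> space Omega" for \<omega>
    using \<omega> by (auto simp: Wf_def A_def)
  have cg_meas: "(\<lambda>\<omega>. cterm \<sigma> m \<omega> + gterm \<sigma> (Suc m) \<omega>) \<in> borel_measurable Omega"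
    using cterm_meas[OF \<sigma>] gterm_meas[OF \<sigma>] by measurable
  have cg_int: "integrable P (\<lambda>\<omega>. cterm \<sigma> m \<omega> + gterm \<sigma> (Suc m) \<omega>)"
  proof (rule intP[OF cg_meas])
    fix \<omega> :: "'e omega" assume \<omega>: "\<omega> \<in> space Omega"
    show "\<bar>cterm \<sigma> m \<omega> + gterm \<sigma> (Suc m) \<omega>\<bar> \<le> real m * (Bc * T) + real (Suc m) * Bg"
      using cterm_bounds[OF \<omega>, of \<sigma> m] gterm_bounds[OF \<omega>, of \<sigma> "Suc m"] by auto
  qed
  have YZ: "(\<lambda>\<omega>. (Yn m \<omega>, snd \<omega> m)) \<in> Omega \<rightarrow>\<^sub>M Ysp m \<Otimes>\<^sub>M Mstep" by measurable
  have YZs: "(Yn m \<omega>, snd \<omega> m) \<in> space (Ysp m \<Otimes>\<^sub>M Mstep)" if "\<omega> \<in> space Omega" for \<omega>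
    using measurable_space[OF YZ that] .
  have hm: "(\<lambda>\<omega>. indicator A \<omega> * hfun U m (Yn m \<omega>, snd \<omega> m)) \<in> borel_measurable Omega"
    using measurable_compose[OF YZ hfun_meas[OF U]] AO by measurable
  have h_int: "integrable P (\<lambda>\<omega>. indicator A \<omega> * hfun U m (Yn m \<omega>, snd \<omega> m))"
  proof (rule intP[OF hm])
    fix \<omega> :: "'e omega" assume "\<omega> \<in> space Omega"
    then show "\<bar>indicator A \<omega> * hfun U m (Yn m \<omega>, snd \<omega> m)\<bar> \<le> Bc * T + BU"
      using hfun_bounds[OF YZs U0 UB] BU0 by (auto simp: indicator_def)
  qed
  have Hm: "(\<lambda>\<omega>. indicator A \<omega> * Hc U m \<omega>) \<in> borel_measurable Omega"
    using Hc_meas[OF U, of m] AO by measurable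
  have H_int: "integrable P (\<lambda>\<omega>. indicator A \<omega> * Hc U m \<omega>)"
  proof (rule intP[OF Hm])
    fix \<omega> :: "'e omega" assume "\<omega> \<in> space Omega"
    then show "\<bar>indicator A \<omega> * Hc U m \<omega>\<bar> \<le> Bc * T + BU"
      using Hc_bounds[OF _ U U0 UB] BU0 by (auto simp: indicator_def)
  qed
  have "(\<integral>\<omega>. Zf U \<sigma> (Suc m) \<omega> \<partial>P)
      = (\<integral>\<omega>. (cterm \<sigma> m \<omega> + gterm \<sigma> (Suc m) \<omega>) + indicator A \<omega> * hfun U m (Yn m \<omega>, snd \<omega> m) \<partial>P)"
    by (rule Bochner_Integration.integral_cong[OF refl]) (simp add: pw space_P)
  also have "\<dots> = (\<integral>\<omega>. cterm \<sigma> m \<omega> + gterm \<sigma> (Suc m) \<omega> \<partial>P) + (\<integral>\<omega>. indicator A \<omega> * hfun U m (Yn m \<omega>, snd \<omega> m) \<partial>P)"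
    by (rule Bochner_Integration.integral_add[OF cg_int h_int])
  also have "(\<integral>\<omega>. indicator A \<omega> * hfun U m (Yn m \<omega>, snd \<omega> m) \<partial>P) = (\<integral>\<omega>. indicator A \<omega> * Hc U m \<omega> \<partial>P)"
    unfolding Hc_def by (rule one_step[OF A hfun_meas[OF U]]) (rule hfun_bounds[OF _ U0 UB])
  also have "(\<integral>\<omega>. cterm \<sigma> m \<omega> + gterm \<sigma> (Suc m) \<omega> \<partial>P) + (\<integral>\<omega>. indicator A \<omega> * Hc U m \<omega> \<partial>P)
      = (\<integral>\<omega>. (cterm \<sigma> m \<omega> + gterm \<sigma> (Suc m) \<omega>) + indicator A \<omega> * Hc U m \<omega> \<partial>P)"
    by (rule Bochner_Integration.integral_add[OF cg_int H_int, symmetric])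
  also have "\<dots> = (\<integral>\<omega>. Wf U \<sigma> m \<omega> \<partial>P)"
    by (rule Bochner_Integration.integral_cong[OF refl]) (simp add: pw2 space_P)
  finally show ?thesis .
qed

end

context problem
begin

lemma contf_as_integral:
  assumes U: "bm U"
  shows "contf U r x = (\<integral>p. c x * max 0 (min (fst p) r) + indicator ({0..r} \<times> UNIV) p * U (r - fst p) (snd p) \<partial>K x)"
proof -
  interpret prob_space "K x" by (rule Kp)
  have i1: "integrable (K x) (\<lambda>p. c x * max 0 (min (fst p) r))"
  proof (rule integrable_const_bound[where B="\<bar>c x\<bar> * \<bar>r\<bar>"])
    show "AE p in K x. norm (c x * max 0 (min (fst p) r)) \<le> \<bar>c x\<bar> * \<bar>r\<bar>"
      by (intro AE_I2) (auto simp: abs_mult intro!: mult_left_mono)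
    show "(\<lambda>p. c x * max 0 (min (fst p) r)) \<in> borel_measurable (K x)"
      by (simp add: measurable_cong_sets[OF Ks refl])
  qed
  have "contf U r x = (\<integral>p. c x * max 0 (min (fst p) r) \<partial>K x) + (\<integral>p. indicator ({0..r} \<times> UNIV) p * U (r - fst p) (snd p) \<partial>K x)"
    unfolding contf_def Lk_eq by simp
  also have "\<dots> = (\<integral>p. c x * max 0 (min (fst p) r) + indicator ({0..r} \<times> UNIV) p * U (r - fst p) (snd p) \<partial>K x)"
    by (rule Bochner_Integration.integral_add[OF i1 bm_integrable[OF U], symmetric])
  finally show ?thesis .
qed

lemma contf_integrable:
  assumes U: "bm U"
  shows "integrable (K x) (\<lambda>p. c x * max 0 (min (fst p) r) + indicator ({0..r} \<times> UNIV) p * U (r - fst p) (snd p))"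
proof -
  interpret prob_space "K x" by (rule Kp)
  have i1: "integrable (K x) (\<lambda>p. c x * max 0 (min (fst p) r))"
  proof (rule integrable_const_bound[where B="\<bar>c x\<bar> * \<bar>r\<bar>"])
    show "AE p in K x. norm (c x * max 0 (min (fst p) r)) \<le> \<bar>c x\<bar> * \<bar>r\<bar>"
      by (intro AE_I2) (auto simp: abs_mult intro!: mult_left_mono)
    show "(\<lambda>p. c x * max 0 (min (fst p) r)) \<in> borel_measurable (K x)"
      by (simp add: measurable_cong_sets[OF Ks refl])
  qed
  show ?thesis by (rule Bochner_Integration.integrable_add[OF i1 bm_integrable[OF U]])
qed

end

context full
begin

lemma hfun_integrable:
  assumes \<omega>: "\<omega> \<in> space Omega" and U: "bm U" and U0: "\<And>s x. 0 \<le> U s x" and UB: "\<And>s x. U s x \<le> BU"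
  shows "integrable (K (Xn \<omega> m)) (\<lambda>p. hfun U m (Yn m \<omega>, p))"
proof -
  interpret Kp: prob_space "K (Xn \<omega> m)" by (rule Kp)
  have Ym: "Yn m \<omega> \<in> space (Ysp m)" using measurable_space[OF meas_Yn, of \<omega> m] \<omega> by simp
  have hb: "0 \<le> hfun U m (Yn m \<omega>, p) \<and> hfun U m (Yn m \<omega>, p) \<le> Bc * T + BU" if "p \<in> space (K (Xn \<omega> m))" for p
    by (rule hfun_bounds[OF _ U0 UB]) (use Ym that Ksp in \<open>auto simp: space_pair_measure space_Mstep\<close>)
  have mp: "(\<lambda>p. (Yn m \<omega>, p)) \<in> K (Xn \<omega> m) \<rightarrow>\<^sub>M Ysp m \<Otimes>\<^sub>M Mstep"
    using Ym by (simp add: measurable_cong_sets[OF Ks refl])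
  have mh: "(\<lambda>p. hfun U m (Yn m \<omega>, p)) \<in> borel_measurable (K (Xn \<omega> m))"
    using measurable_compose[OF mp hfun_meas[OF U]] by simp
  show ?thesis using hb mh by (intro Kp.integrable_const_bound[where B="Bc * T + BU"] AE_I2) auto
qed

lemma hfun_eval:
  assumes \<omega>: "\<omega> \<in> space Omega" and S: "Sn \<omega> m < T" and p: "0 \<le> fst p"
  shows "hfun U m (Yn m \<omega>, p) = c (Xn \<omega> m) * max 0 (min (fst p) (T - Sn \<omega> m))
           + (if fst p < T - Sn \<omega> m then U (T - Sn \<omega> m - fst p) (snd p) else 0)"
proof -
  have "min (Sn \<omega> m + fst p) T - min (Sn \<omega> m) T = max 0 (min (fst p) (T - Sn \<omega> m))"
    using S p by (auto simp: min_def max_def)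
  then show ?thesis
    by (simp add: hfun_def Xn_Y[of m m, symmetric] Sn_Y[of m m, symmetric] diff_diff_eq add.commute) 
qed

lemma Hc_le_contf:
  assumes \<omega>: "\<omega> \<in> space Omega" and S: "Sn \<omega> m < T" and U: "bm U" and U0: "\<And>s x. 0 \<le> U s x" and UB: "\<And>s x. U s x \<le> BU"
  shows "Hc U m \<omega> \<le> contf U (T - Sn \<omega> m) (Xn \<omega> m)"
  unfolding Hc_def contf_as_integral[OF U]
proof (rule integral_mono[OF hfun_integrable[OF \<omega> U U0 UB] contf_integrable[OF U]])
  fix p assume "p \<in> space (K (Xn \<omega> m))"
  then have p: "0 \<le> fst p" by (auto simp: Ksp mem_Times_iff)
  show "hfun U m (Yn m \<omega>, p) \<le> c (Xn \<omega> m) * max 0 (min (fst p) (T - Sn \<omega> m)) +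
         indicator ({0..T - Sn \<omega> m} \<times> UNIV) p * U (T - Sn \<omega> m - fst p) (snd p)"
    unfolding hfun_eval[OF \<omega> S p] using p U0 by (auto simp: indicator_def mem_Times_iff)
qed

lemma Hc_eq_contf:
  assumes \<omega>: "\<omega> \<in> space Omega" and S: "Sn \<omega> m < T" and U: "bm U" and U0: "\<And>s x. 0 \<le> U s x" and UB: "\<And>s x. U s x \<le> BU"
    and Uz: "\<And>y. U 0 y = 0"
  shows "Hc U m \<omega> = contf U (T - Sn \<omega> m) (Xn \<omega> m)"
  unfolding Hc_def contf_as_integral[OF U]
proof (rule Bochner_Integration.integral_cong[OF refl])
  fix p assume "p \<in> space (K (Xn \<omega> m))"
  then have p: "0 \<le> fst p" by (auto simp: Ksp mem_Times_iff)
  show "hfun U m (Yn m \<omega>, p) = c (Xn \<omega> m) * max 0 (min (fst p) (T - Sn \<omega> m)) +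
         indicator ({0..T - Sn \<omega> m} \<times> UNIV) p * U (T - Sn \<omega> m - fst p) (snd p)"
    unfolding hfun_eval[OF \<omega> S p] using p Uz by (auto simp: indicator_def mem_Times_iff)
qed

lemma Hc_zero:
  assumes \<omega>: "\<omega> \<in> space Omega" and S: "T \<le> Sn \<omega> m"
  shows "Hc U m \<omega> = 0"
proof -
  have "Hc U m \<omega> = (\<integral>p. 0 \<partial>K (Xn \<omega> m))"
    unfolding Hc_def
  proof (rule Bochner_Integration.integral_cong[OF refl])
    fix p assume "p \<in> space (K (Xn \<omega> m))"
    then have p: "0 \<le> fst p" by (auto simp: Ksp mem_Times_iff)
    show "hfun U m (Yn m \<omega>, p) = 0"
      using S p by (simp add: hfun_def Xn_Y[of m m, symmetric] Sn_Y[of m m, symmetric] min_def)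
  qed
  then show ?thesis by simp
qed

end

lemma Inf_enat_mem: "Inf (enat ` B) = enat k \<Longrightarrow> k \<in> B"
proof -
  assume a: "Inf (enat ` B) = enat k"
  have "B \<noteq> {}" using a by (auto simp: Inf_enat_def)
  then have "(LEAST x. x \<in> enat ` B) \<in> enat ` B" by (auto intro: LeastI)
  then show ?thesis using a \<open>B \<noteq> {}\<close> by (auto simp: Inf_enat_def)
qed

context full
begin

lemma tau_stop:
  assumes "tau_eps K c g T \<epsilon> \<omega> = enat k" "Sn \<omega> k < T"
  shows "(T - Sn \<omega> k, Xn \<omega> k) \<in> Deps K c g T \<epsilon>"
proof -
  let ?I1 = "Inf (enat ` {n. (T - Sn \<omega> n, Xn \<omega> n) \<in> Deps K c g T \<epsilon>})"
  let ?I2 = "Inf (enat ` {n. T \<le> Sn \<omega> n})"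
  have "min ?I1 ?I2 = enat k" using assms(1) by (simp add: tau_eps_def)
  then have "?I1 = enat k \<or> ?I2 = enat k" by (auto simp: min_def split: if_splits)
  then show ?thesis
  proof
    assume "?I2 = enat k" then have "T \<le> Sn \<omega> k" using Inf_enat_mem by blast
    then show ?thesis using assms(2) by simp
  next
    assume "?I1 = enat k" then show ?thesis using Inf_enat_mem by blast
  qed
qed

lemma tau_cont:
  assumes "enat k < tau_eps K c g T \<epsilon> \<omega>"
  shows "(T - Sn \<omega> k, Xn \<omega> k) \<notin> Deps K c g T \<epsilon> \<and> Sn \<omega> k < T"
proof -
  let ?I1 = "Inf (enat ` {n. (T - Sn \<omega> n, Xn \<omega> n) \<in> Deps K c g T \<epsilon>})"
  let ?I2 = "Inf (enat ` {n. T \<le> Sn \<omega> n})"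
  have k: "enat k < ?I1" "enat k < ?I2" using assms by (auto simp: tau_eps_def)
  show ?thesis
  proof
    show "(T - Sn \<omega> k, Xn \<omega> k) \<notin> Deps K c g T \<epsilon>"
    proof
      assume "(T - Sn \<omega> k, Xn \<omega> k) \<in> Deps K c g T \<epsilon>"
      then have "?I1 \<le> enat k" by (intro Inf_lower) auto
      then show False using k(1) by simp
    qed
    show "Sn \<omega> k < T"
    proof (rule ccontr)
      assume "\<not> Sn \<omega> k < T"
      then have "?I2 \<le> enat k" by (intro Inf_lower) auto
      then show False using k(2) by simp
    qed
  qed
qed

lemma LI_ab:
  assumes \<omega>: "\<omega> \<in> space Omega" and "0 \<le> a" "a \<le> b" "b \<le> T"
  shows "LI \<omega> a \<le> LI \<omega> b" "LI \<omega> b \<le> LI \<omega> a + Bc * T"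
proof -
  show "LI \<omega> a \<le> LI \<omega> b" using LI_mono(1)[OF \<omega>] assms by simp
  have "Bc * (b - a) \<le> Bc * T" using assms Bc_nonneg by (intro mult_left_mono) auto
  then show "LI \<omega> b \<le> LI \<omega> a + Bc * T" using LI_mono(2)[OF \<omega> assms(2,3)] by simp
qed

lemma Rcost_alt:
  "Rcost c g T \<sigma> \<omega> = (if Stau \<sigma> \<omega> < ereal T then LI \<omega> (real_of_ereal (Stau \<sigma> \<omega>)) + g (Xt \<omega> (real_of_ereal (Stau \<sigma> \<omega>))) else LI \<omega> T)"
  by (simp add: Rcost_def LI_def)

lemma cterm_alt:
  assumes \<omega>: "\<omega> \<in> space Omega"
  shows "cterm \<sigma> n \<omega> = LI \<omega> (min (Sn \<omega> (case \<sigma> \<omega> of enat i \<Rightarrow> min i n | \<infinity> \<Rightarrow> n)) T)"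
proof -
  let ?q = "case \<sigma> \<omega> of enat i \<Rightarrow> min i n | \<infinity> \<Rightarrow> n"
  have "cterm \<sigma> n \<omega> = (\<Sum>j\<in>{j\<in>{..<n}. enat j < \<sigma> \<omega>}. Cc T \<omega> j)"
    unfolding cterm_def by (rule sum.inter_filter[symmetric]) simp
  also have "{j\<in>{..<n}. enat j < \<sigma> \<omega>} = {..<?q}"
    by (cases "\<sigma> \<omega>") auto
  also have "(\<Sum>j<?q. Cc T \<omega> j) = LI \<omega> (min (Sn \<omega> ?q) T)"
    by (rule LI_sum[OF \<omega> T, symmetric])
  finally show ?thesis .
qed

lemma gterm_alt:
  "gterm \<sigma> n \<omega> = (case \<sigma> \<omega> of enat i \<Rightarrow> (if i < n \<and> Sn \<omega> i < T then g (Xn \<omega> i) else 0) | \<infinity> \<Rightarrow> 0)"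
proof (cases "\<sigma> \<omega>")
  case (enat i)
  have "gterm \<sigma> n \<omega> = (\<Sum>j<n. if j = i then (if Sn \<omega> i < T then g (Xn \<omega> i) else 0) else 0)"
    unfolding gterm_def enat by (intro sum.cong) auto
  also have "\<dots> = (if i < n \<and> Sn \<omega> i < T then g (Xn \<omega> i) else 0)"
    by (simp add: sum.delta')
  finally show ?thesis using enat by simp
next
  case infinity then show ?thesis by (simp add: gterm_def)
qed

lemma RZ:
  assumes \<omega>: "\<omega> \<in> space Omega" and Tp: "\<forall>j. 0 < Tn \<omega> (Suc j)"
  shows "cterm \<sigma> n \<omega> + gterm \<sigma> n \<omega> \<le> Rcost c g T \<sigma> \<omega>"
    and "Rcost c g T \<sigma> \<omega> \<le> cterm \<sigma> n \<omega> + gterm \<sigma> n \<omega> + (if Sn \<omega> n < T then Bc * T + Bg else 0)"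
proof -
  have E0: "0 \<le> Bc * T + Bg" using Bc_nonneg Bg_nonneg T by simp
  have Sn0: "\<And>j. 0 \<le> Sn \<omega> j" by (rule Sn_nonneg[OF \<omega>])
  have Smono: "\<And>i j. i \<le> j \<Longrightarrow> Sn \<omega> i \<le> Sn \<omega> j" by (rule Sn_mono[OF \<omega>])
  have "cterm \<sigma> n \<omega> + gterm \<sigma> n \<omega> \<le> Rcost c g T \<sigma> \<omega> \<and>
        Rcost c g T \<sigma> \<omega> \<le> cterm \<sigma> n \<omega> + gterm \<sigma> n \<omega> + (if Sn \<omega> n < T then Bc * T + Bg else 0)"
  proof (cases "\<sigma> \<omega>")
    case (enat i)
    have St: "Stau \<sigma> \<omega> = ereal (Sn \<omega> i)" using enat by (simp add: Stau_def)
    have Xi: "Xt \<omega> (Sn \<omega> i) = Xn \<omega> i"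
      using Tp by (intro Xt_eq[OF \<omega>]) (auto simp: Sn_Suc Tn_Suc)
    have R: "Rcost c g T \<sigma> \<omega> = LI \<omega> (min (Sn \<omega> i) T) + (if Sn \<omega> i < T then g (Xn \<omega> i) else 0)"
      unfolding Rcost_alt St using Xi by (auto simp: min_def)
    show ?thesis
    proof (cases "i < n")
      case True
      have "cterm \<sigma> n \<omega> = LI \<omega> (min (Sn \<omega> i) T)" using cterm_alt[OF \<omega>, of \<sigma> n] enat True by simp
      moreover have "gterm \<sigma> n \<omega> = (if Sn \<omega> i < T then g (Xn \<omega> i) else 0)" using gterm_alt[of \<sigma> n \<omega>] enat True by simp
      ultimately show ?thesis using R E0 by auto
    next
      case False
      have c: "cterm \<sigma> n \<omega> = LI \<omega> (min (Sn \<omega> n) T)" using cterm_alt[OF \<omega>, of \<sigma> n] enat False by simp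
      have gz: "gterm \<sigma> n \<omega> = 0" using gterm_alt[of \<sigma> n \<omega>] enat False by simp
      have ni: "Sn \<omega> n \<le> Sn \<omega> i" using False Smono by simp
      have ab: "LI \<omega> (min (Sn \<omega> n) T) \<le> LI \<omega> (min (Sn \<omega> i) T)"
               "LI \<omega> (min (Sn \<omega> i) T) \<le> LI \<omega> (min (Sn \<omega> n) T) + Bc * T"
        using LI_ab[OF \<omega>, of "min (Sn \<omega> n) T" "min (Sn \<omega> i) T"] ni Sn0 T by auto
      show ?thesis
      proof (cases "Sn \<omega> n < T")
        case True
        then show ?thesis unfolding R c gz using ab g_nonneg[of "Xn \<omega> i"] g_le[of "Xn \<omega> i"] by auto
      next
        case F: False
        then have "\<not> Sn \<omega> i < T" using ni by simp
        moreover have "min (Sn \<omega> i) T = T" "min (Sn \<omega> n) T = T" using F ni by auto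
        ultimately show ?thesis unfolding R c gz using F by simp
      qed
    qed
  next
    case infinity
    have c: "cterm \<sigma> n \<omega> = LI \<omega> (min (Sn \<omega> n) T)" using cterm_alt[OF \<omega>, of \<sigma> n] infinity by simp
    have gz: "gterm \<sigma> n \<omega> = 0" using gterm_alt[of \<sigma> n \<omega>] infinity by simp
    have St: "Stau \<sigma> \<omega> = Sinf \<omega>" using infinity by (simp add: Stau_def)
    have Sge: "ereal (Sn \<omega> n) \<le> Sinf \<omega>" by (rule Sinf_ge)
    show ?thesis
    proof (cases "Sinf \<omega> < ereal T")
      case True
      define a where "a = real_of_ereal (Sinf \<omega>)"
      have fin: "\<bar>Sinf \<omega>\<bar> \<noteq> \<infinity>" using True Sge by auto
      have ea: "Sinf \<omega> = ereal a" unfolding a_def using fin by (simp add: ereal_real)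
      have na: "Sn \<omega> n \<le> a" "a < T" using Sge True ea by auto
      have R: "Rcost c g T \<sigma> \<omega> = LI \<omega> a + g (Xt \<omega> a)"
        unfolding Rcost_alt St using True by (simp add: a_def)
      have ab: "LI \<omega> (Sn \<omega> n) \<le> LI \<omega> a" "LI \<omega> a \<le> LI \<omega> (Sn \<omega> n) + Bc * T"
        using LI_ab[OF \<omega>, of "Sn \<omega> n" a] na Sn0 by auto
      show ?thesis unfolding R c gz using ab na g_nonneg[of "Xt \<omega> a"] g_le[of "Xt \<omega> a"] by (auto simp: min_def)
    next
      case False
      have R: "Rcost c g T \<sigma> \<omega> = LI \<omega> T" unfolding Rcost_alt St using False by simp
      show ?thesis
      proof (cases "Sn \<omega> n < T")
        case True
        have ab: "LI \<omega> (Sn \<omega> n) \<le> LI \<omega> T" "LI \<omega> T \<le> LI \<omega> (Sn \<omega> n) + Bc * T"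
          using LI_ab[OF \<omega>, of "Sn \<omega> n" T] True Sn0 by auto
        show ?thesis unfolding R c gz using ab True Bg_nonneg by (auto simp: min_def)
      next
        case F: False
        then show ?thesis unfolding R c gz by (simp add: min_def)
      qed
    qed
  qed
  then show "cterm \<sigma> n \<omega> + gterm \<sigma> n \<omega> \<le> Rcost c g T \<sigma> \<omega>"
    and "Rcost c g T \<sigma> \<omega> \<le> cterm \<sigma> n \<omega> + gterm \<sigma> n \<omega> + (if Sn \<omega> n < T then Bc * T + Bg else 0)"
    by auto
qed

end

context full
begin

lemma Zf_meas: "is_stopping_time \<sigma> \<Longrightarrow> bm U \<Longrightarrow> Zf U \<sigma> m \<in> borel_measurable Omega"
  unfolding Zf_def[abs_def] using cterm_meas gterm_meas uterm_meas by measurable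

lemma Wf_meas: "is_stopping_time \<sigma> \<Longrightarrow> bm U \<Longrightarrow> Wf U \<sigma> m \<in> borel_measurable Omega"
proof -
  assume \<sigma>: "is_stopping_time \<sigma>" and U: "bm U"
  note [measurable] = cterm_meas[OF \<sigma>] gterm_meas[OF \<sigma>] Hc_meas[OF U]
  show ?thesis unfolding Wf_def[abs_def] using st_pred[OF \<sigma>, of "\<lambda>e. enat m < e"] by measurable
qed

lemma Zf_int:
  assumes \<sigma>: "is_stopping_time \<sigma>" and U: "bm U" and U0: "\<And>s x. 0 \<le> U s x" and UB: "\<And>s x. U s x \<le> BU"
  shows "integrable P (Zf U \<sigma> m)"
proof (rule intP[OF Zf_meas[OF \<sigma> U]])
  fix \<omega> :: "'e omega" assume \<omega>: "\<omega> \<in> space Omega"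
  have BU0: "0 \<le> BU" using U0 UB by (meson order_trans)
  have "0 \<le> uterm U \<sigma> m \<omega> \<and> uterm U \<sigma> m \<omega> \<le> BU"
    using U0 UB BU0 by (auto simp: uterm_def)
  then show "\<bar>Zf U \<sigma> m \<omega>\<bar> \<le> real m * (Bc * T) + real m * Bg + BU"
    using cterm_bounds[OF \<omega>, of \<sigma> m] gterm_bounds[OF \<omega>, of \<sigma> m] by (auto simp: Zf_def)
qed

lemma Wf_int:
  assumes \<sigma>: "is_stopping_time \<sigma>" and U: "bm U" and U0: "\<And>s x. 0 \<le> U s x" and UB: "\<And>s x. U s x \<le> BU"
  shows "integrable P (Wf U \<sigma> m)"
proof (rule intP[OF Wf_meas[OF \<sigma> U]])
  fix \<omega> :: "'e omega" assume \<omega>: "\<omega> \<in> space Omega"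
  have "0 \<le> (if enat m < \<sigma> \<omega> then Hc U m \<omega> else 0) \<and> (if enat m < \<sigma> \<omega> then Hc U m \<omega> else 0) \<le> Bc * T + BU"
    using Hc_bounds[OF \<omega> U U0 UB, of m] by auto
  then show "\<bar>Wf U \<sigma> m \<omega>\<bar> \<le> real m * (Bc * T) + real (Suc m) * Bg + (Bc * T + BU)"
    using cterm_bounds[OF \<omega>, of \<sigma> m] gterm_bounds[OF \<omega>, of \<sigma> "Suc m"] by (auto simp: Wf_def)
qed

lemma Rcost_int:
  assumes \<sigma>: "is_stopping_time \<sigma>"
  shows "integrable P (Rcost c g T \<sigma>)"
  by (rule intP[OF Rcost_meas[OF \<sigma>]]) (use Rcost_bounds[OF _ T] in \<open>auto\<close>)

lemma gterm_Suc: "gterm \<sigma> (Suc m) \<omega> = gterm \<sigma> m \<omega> + (if \<sigma> \<omega> = enat m \<and> Sn \<omega> m < T then g (Xn \<omega> m) else 0)"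
  by (simp add: gterm_def)

lemma base_eq:
  assumes \<sigma>: "is_stopping_time \<sigma>" and U: "bm U"
  shows "(\<integral>\<omega>. Zf U \<sigma> 0 \<omega> \<partial>P) = (if 0 < T then U T x0 else 0)"
proof -
  have "(\<integral>\<omega>. Zf U \<sigma> 0 \<omega> \<partial>P) = (\<integral>\<omega>. (if 0 < T then U T x0 else 0) \<partial>P)"
  proof (rule integral_cong_AE)
    show "Zf U \<sigma> 0 \<in> borel_measurable P" using Zf_meas[OF \<sigma> U] by (simp add: borel_P_cong)
    show "AE \<omega> in P. Zf U \<sigma> 0 \<omega> = (if 0 < T then U T x0 else 0)"
      using AE_X0 by eventually_elim (simp add: Zf_def cterm_def gterm_def uterm_def Sn_alt zero_enat_def[symmetric])
  qed simp
  then show ?thesis by (simp add: prob_space)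
qed

lemma low_pw:
  assumes \<omega>: "\<omega> \<in> space Omega"
  shows "Zf (V (Suc j)) \<sigma> k \<omega> \<le> Wf (V j) \<sigma> k \<omega>"
proof -
  have "uterm (V (Suc j)) \<sigma> k \<omega> \<le> (if \<sigma> \<omega> = enat k \<and> Sn \<omega> k < T then g (Xn \<omega> k) else 0) + (if enat k < \<sigma> \<omega> then Hc (V j) k \<omega> else 0)"
  proof (cases "enat k \<le> \<sigma> \<omega> \<and> Sn \<omega> k < T")
    case True
    show ?thesis
    proof (cases "\<sigma> \<omega> = enat k")
      case True
      then show ?thesis using \<open>enat k \<le> \<sigma> \<omega> \<and> Sn \<omega> k < T\<close> V_le_g by (simp add: uterm_def)
    next
      case False
      then have lt: "enat k < \<sigma> \<omega>" using True by auto
      have "V (Suc j) (T - Sn \<omega> k) (Xn \<omega> k) \<le> contf (V j) (T - Sn \<omega> k) (Xn \<omega> k)" by (simp add: V_Suc)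
      also have "\<dots> = Hc (V j) k \<omega>"
        by (rule Hc_eq_contf[OF \<omega> _ bm_V V_nonneg V_le_Bg V_at0, symmetric]) (use True in simp)
      finally show ?thesis using True False lt by (simp add: uterm_def)
    qed
  next
    case False
    have "0 \<le> Hc (V j) k \<omega>" using Hc_bounds[OF \<omega> bm_V V_nonneg V_le_Bg] by blast
    then show ?thesis using False g_nonneg by (auto simp: uterm_def)
  qed
  then show ?thesis by (simp add: Zf_def Wf_def gterm_Suc)
qed

lemma lower_bound:
  assumes \<sigma>: "is_stopping_time \<sigma>"
  shows "V n T x0 \<le> (\<integral>\<omega>. Rcost c g T \<sigma> \<omega> \<partial>P)"
proof -
  define F where "F k = (\<integral>\<omega>. Zf (V (n - k)) \<sigma> k \<omega> \<partial>P)" for k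
  have F0: "F 0 = V n T x0"
    using base_eq[OF \<sigma> bm_V, of n] T V_at0[of n x0] by (auto simp: F_def)
  have Fstep: "F k \<le> F (Suc k)" if k: "k < n" for k
  proof -
    obtain j where j: "n - k = Suc j" "n - Suc k = j" using k by (metis Suc_diff_Suc)
    have "F k = (\<integral>\<omega>. Zf (V (Suc j)) \<sigma> k \<omega> \<partial>P)" by (simp add: F_def j)
    also have "\<dots> \<le> (\<integral>\<omega>. Wf (V j) \<sigma> k \<omega> \<partial>P)"
      by (rule integral_mono[OF Zf_int[OF \<sigma> bm_V V_nonneg V_le_Bg] Wf_int[OF \<sigma> bm_V V_nonneg V_le_Bg]])
         (use low_pw in \<open>simp add: space_P\<close>)
    also have "\<dots> = (\<integral>\<omega>. Zf (V j) \<sigma> (Suc k) \<omega> \<partial>P)"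
      by (rule step_eq[OF \<sigma> bm_V V_nonneg V_le_Bg, symmetric])
    also have "\<dots> = F (Suc k)" by (simp add: F_def j)
    finally show ?thesis .
  qed
  have "F 0 \<le> F k" if "k \<le> n" for k
    using that
  proof (induct k)
    case (Suc k) then show ?case using Fstep[of k] by simp
  qed simp
  then have "V n T x0 \<le> F n" using F0 by simp
  also have "F n \<le> (\<integral>\<omega>. Rcost c g T \<sigma> \<omega> \<partial>P)"
    unfolding F_def
  proof (rule integral_mono_AE[OF Zf_int[OF \<sigma> bm_V V_nonneg V_le_Bg] Rcost_int[OF \<sigma>]])
    show "AE \<omega> in P. Zf (V (n - n)) \<sigma> n \<omega> \<le> Rcost c g T \<sigma> \<omega>"
      using AE_Tpos AE_space
    proof eventually_elim
      case (elim \<omega>)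
      then have \<omega>: "\<omega> \<in> space Omega" by (simp add: space_P)
      show ?case using RZ(1)[OF \<omega> elim(1), of \<sigma> n] by (simp add: Zf_def uterm_def V0)
    qed
  qed
  finally show ?thesis .
qed

end

context full
begin

lemma inner_meas:
  fixes h :: "_ \<Rightarrow> real"
  assumes h: "h \<in> borel_measurable (Ysp m \<Otimes>\<^sub>M Mstep)"
  shows "(\<lambda>\<omega>. \<integral>p. h (Yn m \<omega>, p) \<partial>K (Xn \<omega> m)) \<in> borel_measurable Omega"
proof -
  note h[measurable]
  have "(\<lambda>(\<omega>, p). h (Yn m \<omega>, p)) \<in> borel_measurable (Omega \<Otimes>\<^sub>M Mstep)" by measurable
  then show ?thesis
    by (rule integral_measurable_subprob_algebra2[where f="\<lambda>\<omega> p. h (Yn m \<omega>, p)" and L="\<lambda>\<omega>. K (Xn \<omega> m)" and N=Mstep])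
       (auto intro: measurable_compose[OF meas_Xn K_meas[OF K]])
qed

lemma S_prob: "(\<integral>\<omega>. (if Sn \<omega> k \<le> T then 1 else 0) \<partial>P) \<le> \<beta> ^ k"
proof (induct k)
  case 0
  have "(\<integral>\<omega>. (if Sn \<omega> 0 \<le> T then 1 else 0 :: real) \<partial>P) = 1"
    using T by (simp add: Sn_alt prob_space)
  then show ?case by simp
next
  case (Suc k)
  define h where "h z = (if yS k (fst z) + fst (snd z) \<le> T then 1 else 0 :: real)" for z :: "('e \<times> (nat \<Rightarrow> real \<times> 'e)) \<times> (real \<times> 'e)"
  have hm: "h \<in> borel_measurable (Ysp k \<Otimes>\<^sub>M Mstep)"
  proof -
    have [measurable]: "(\<lambda>z. yS k (fst z)) \<in> borel_measurable (Ysp k \<Otimes>\<^sub>M Mstep)"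
      by (rule measurable_compose[OF measurable_fst meas_yS]) simp
    have [measurable]: "(\<lambda>z. fst (snd z)) \<in> borel_measurable (Ysp k \<Otimes>\<^sub>M Mstep)"
      by (rule measurable_compose[OF measurable_snd meas_Mstep_fst])
    show ?thesis unfolding h_def[abs_def] by measurable
  qed
  have "(\<integral>\<omega>. (if Sn \<omega> (Suc k) \<le> T then 1 else 0) \<partial>P) = (\<integral>\<omega>. h (Yn k \<omega>, snd \<omega> k) \<partial>P)"
    by (simp add: h_def Sn_Suc Sn_Y[of k k])
  also have "\<dots> = (\<integral>\<omega>. (\<integral>p. h (Yn k \<omega>, p) \<partial>K (Xn \<omega> k)) \<partial>P)"
    by (rule one_step0[OF hm, where B=1]) (auto simp: h_def)
  also have "\<dots> \<le> (\<integral>\<omega>. \<beta> * (if Sn \<omega> k \<le> T then 1 else 0) \<partial>P)"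
  proof (rule integral_mono)
    show "integrable P (\<lambda>\<omega>. \<integral>p. h (Yn k \<omega>, p) \<partial>K (Xn \<omega> k))"
    proof (rule intP[OF inner_meas[OF hm], where B=1])
      fix \<omega> :: "'e omega"
      interpret Kp: prob_space "K (Xn \<omega> k)" by (rule Kp)
      have "\<bar>\<integral>p. h (Yn k \<omega>, p) \<partial>K (Xn \<omega> k)\<bar> \<le> (\<integral>p. \<bar>h (Yn k \<omega>, p)\<bar> \<partial>K (Xn \<omega> k))" by (rule integral_abs_bound)
      also have "\<dots> \<le> (\<integral>p. 1 \<partial>K (Xn \<omega> k))"
        by (rule integral_mono_AE') (auto simp: h_def)
      finally show "\<bar>\<integral>p. h (Yn k \<omega>, p) \<partial>K (Xn \<omega> k)\<bar> \<le> 1" by (simp add: Kp.prob_space)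
    qed
    show "integrable P (\<lambda>\<omega>. \<beta> * (if Sn \<omega> k \<le> T then 1 else 0))"
      by (rule intP[where B="\<bar>\<beta>\<bar>"]) auto
    fix \<omega> assume \<omega>: "\<omega> \<in> space P"
    then have \<omega>': "\<omega> \<in> space Omega" by (simp add: space_P)
    interpret Kp: prob_space "K (Xn \<omega> k)" by (rule Kp)
    have "(\<integral>p. h (Yn k \<omega>, p) \<partial>K (Xn \<omega> k)) = (\<integral>p. indicator ({0..T - Sn \<omega> k} \<times> UNIV) p \<partial>K (Xn \<omega> k))"
    proof (rule Bochner_Integration.integral_cong[OF refl])
      fix p assume "p \<in> space (K (Xn \<omega> k))"
      then have "0 \<le> fst p" by (auto simp: Ksp mem_Times_iff)
      then show "h (Yn k \<omega>, p) = indicator ({0..T - Sn \<omega> k} \<times> UNIV) p"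
        by (auto simp: h_def Sn_Y[of k k, symmetric] indicator_def mem_Times_iff)
    qed
    also have "\<dots> = Qk K (T - Sn \<omega> k) UNIV (Xn \<omega> k)"
    proof -
      have "({0..T - Sn \<omega> k} \<times> UNIV) \<inter> space (K (Xn \<omega> k)) = {0..T - Sn \<omega> k} \<times> UNIV" by (auto simp: Ksp)
      then show ?thesis using Icc_UNIV_sets[of "T - Sn \<omega> k"] by (simp add: Qk_def Ks)
    qed
    also have "\<dots> \<le> \<beta> * (if Sn \<omega> k \<le> T then 1 else 0)"
    proof (cases "Sn \<omega> k \<le> T")
      case True
      then show ?thesis using Qk_le_beta[of "T - Sn \<omega> k"] Sn_nonneg[OF \<omega>'] by simp
    next
      case False
      then have "{0..T - Sn \<omega> k} \<times> UNIV = ({} :: (real \<times> 'e) set)" by auto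
      then show ?thesis using False by (simp add: Qk_def)
    qed
    finally show "(\<integral>p. h (Yn k \<omega>, p) \<partial>K (Xn \<omega> k)) \<le> \<beta> * (if Sn \<omega> k \<le> T then 1 else 0)" .
  qed
  also have "\<dots> = \<beta> * (\<integral>\<omega>. (if Sn \<omega> k \<le> T then 1 else 0) \<partial>P)" by simp
  also have "\<dots> \<le> \<beta> * \<beta> ^ k" using Suc beta_nonneg by (intro mult_left_mono) auto
  finally show ?case by simp
qed

lemma up_pw:
  assumes \<omega>: "\<omega> \<in> space Omega" and U: "bm U" and U0: "\<And>s x. 0 \<le> U s x" and UB: "\<And>s x. U s x \<le> BU"
    and D1: "\<And>s x. 0 < s \<Longrightarrow> s \<le> T \<Longrightarrow> (s, x) \<in> Deps K c g T \<epsilon> \<Longrightarrow> g x \<le> U s x"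
    and D2: "\<And>s x. 0 < s \<Longrightarrow> s \<le> T \<Longrightarrow> (s, x) \<notin> Deps K c g T \<epsilon> \<Longrightarrow> contf U s x \<le> U s x"
  shows "Wf U (tau_eps K c g T \<epsilon>) k \<omega> \<le> Zf U (tau_eps K c g T \<epsilon>) k \<omega>"
proof -
  let ?\<tau> = "tau_eps K c g T \<epsilon>"
  have S0: "0 \<le> Sn \<omega> k" by (rule Sn_nonneg[OF \<omega>])
  have "(if ?\<tau> \<omega> = enat k \<and> Sn \<omega> k < T then g (Xn \<omega> k) else 0) + (if enat k < ?\<tau> \<omega> then Hc U k \<omega> else 0)
        \<le> uterm U ?\<tau> k \<omega>"
  proof (cases "?\<tau> \<omega> = enat k")
    case True
    show ?thesis
    proof (cases "Sn \<omega> k < T")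
      case True
      have "(T - Sn \<omega> k, Xn \<omega> k) \<in> Deps K c g T \<epsilon>" by (rule tau_stop[OF \<open>?\<tau> \<omega> = enat k\<close> True])
      then have "g (Xn \<omega> k) \<le> U (T - Sn \<omega> k) (Xn \<omega> k)" using True S0 by (intro D1) auto
      then show ?thesis using \<open>?\<tau> \<omega> = enat k\<close> True by (simp add: uterm_def)
    next
      case False then show ?thesis using \<open>?\<tau> \<omega> = enat k\<close> by (simp add: uterm_def)
    qed
  next
    case False
    show ?thesis
    proof (cases "enat k < ?\<tau> \<omega>")
      case True
      from tau_cont[OF True] have nD: "(T - Sn \<omega> k, Xn \<omega> k) \<notin> Deps K c g T \<epsilon>" and S: "Sn \<omega> k < T" by auto
      have "Hc U k \<omega> \<le> contf U (T - Sn \<omega> k) (Xn \<omega> k)" by (rule Hc_le_contf[OF \<omega> S U U0 UB])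
      also have "\<dots> \<le> U (T - Sn \<omega> k) (Xn \<omega> k)" using S S0 nD by (intro D2) auto
      finally show ?thesis using True False S by (simp add: uterm_def less_imp_le)
    next
      case F2: False
      then have "\<not> enat k \<le> ?\<tau> \<omega>" using False by auto
      then show ?thesis using False F2 by (simp add: uterm_def)
    qed
  qed
  then show ?thesis by (simp add: Zf_def Wf_def gterm_Suc)
qed

lemma limit_arg:
  fixes a b C \<beta>' :: real
  assumes "\<And>k. a \<le> b + C * \<beta>' ^ k" "0 \<le> C" "0 \<le> \<beta>'" "\<beta>' < 1"
  shows "a \<le> b"
proof (rule ccontr)
  assume "\<not> a \<le> b"
  then have ab: "0 < a - b" by simp
  show False
  proof (cases "C = 0")
    case True then show False using assms(1)[of 0] ab by simp
  next
    case False
    then have C: "0 < C" using assms(2) by simp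
    obtain k where k: "\<beta>' ^ k < (a - b) / C" using real_arch_pow_inv[of "(a - b) / C" \<beta>'] ab C assms(4) by auto
    then have "C * \<beta>' ^ k < a - b" using C by (simp add: field_simps)
    then show False using assms(1)[of k] by simp
  qed
qed

lemma upper_bound:
  assumes \<tau>: "is_stopping_time (tau_eps K c g T \<epsilon>)"
    and U: "bm U" and U0: "\<And>s x. 0 \<le> U s x" and UB: "\<And>s x. U s x \<le> BU"
    and D1: "\<And>s x. 0 < s \<Longrightarrow> s \<le> T \<Longrightarrow> (s, x) \<in> Deps K c g T \<epsilon> \<Longrightarrow> g x \<le> U s x"
    and D2: "\<And>s x. 0 < s \<Longrightarrow> s \<le> T \<Longrightarrow> (s, x) \<notin> Deps K c g T \<epsilon> \<Longrightarrow> contf U s x \<le> U s x"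
  shows "(\<integral>\<omega>. Rcost c g T (tau_eps K c g T \<epsilon>) \<omega> \<partial>P) \<le> U T x0"
proof -
  let ?\<tau> = "tau_eps K c g T \<epsilon>"
  define G where "G k = (\<integral>\<omega>. Zf U ?\<tau> k \<omega> \<partial>P)" for k
  have G0: "G 0 \<le> U T x0" using base_eq[OF \<tau> U] U0[of T x0] by (simp add: G_def)
  have Gs: "G (Suc k) \<le> G k" for k
  proof -
    have "G (Suc k) = (\<integral>\<omega>. Wf U ?\<tau> k \<omega> \<partial>P)" unfolding G_def by (rule step_eq[OF \<tau> U U0 UB])
    also have "\<dots> \<le> G k" unfolding G_def
      by (rule integral_mono[OF Wf_int[OF \<tau> U U0 UB] Zf_int[OF \<tau> U U0 UB]])
         (use up_pw[OF _ U U0 UB D1 D2] in \<open>simp add: space_P\<close>)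
    finally show ?thesis .
  qed
  have Gk: "G k \<le> U T x0" for k
  proof (induct k)
    case 0 then show ?case by (rule G0)
  next
    case (Suc k) then show ?case using Gs[of k] by simp
  qed
  define E where "E = Bc * T + Bg"
  have E0: "0 \<le> E" unfolding E_def using Bc_nonneg Bg_nonneg T by simp
  have bound: "(\<integral>\<omega>. Rcost c g T ?\<tau> \<omega> \<partial>P) \<le> U T x0 + E * \<beta> ^ k" for k
  proof -
    have ind_int: "integrable P (\<lambda>\<omega>. E * (if Sn \<omega> k \<le> T then 1 else 0))"
      by (rule intP[where B="\<bar>E\<bar>"]) auto
    have "(\<integral>\<omega>. Rcost c g T ?\<tau> \<omega> \<partial>P) \<le> (\<integral>\<omega>. Zf U ?\<tau> k \<omega> + E * (if Sn \<omega> k \<le> T then 1 else 0) \<partial>P)"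
    proof (rule integral_mono_AE[OF Rcost_int[OF \<tau>] Bochner_Integration.integrable_add[OF Zf_int[OF \<tau> U U0 UB] ind_int]])
      show "AE \<omega> in P. Rcost c g T ?\<tau> \<omega> \<le> Zf U ?\<tau> k \<omega> + E * (if Sn \<omega> k \<le> T then 1 else 0)"
        using AE_Tpos AE_space
      proof eventually_elim
        case (elim \<omega>)
        then have \<omega>: "\<omega> \<in> space Omega" by (simp add: space_P)
        have "0 \<le> uterm U ?\<tau> k \<omega>" using U0 by (simp add: uterm_def)
        then show ?case using RZ(2)[OF \<omega> elim(1), of ?\<tau> k] E0 by (auto simp: Zf_def E_def split: if_splits)
      qed
    qed
    also have "\<dots> = G k + E * (\<integral>\<omega>. (if Sn \<omega> k \<le> T then 1 else 0) \<partial>P)"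
      unfolding G_def using Zf_int[OF \<tau> U U0 UB] ind_int by simp
    also have "\<dots> \<le> U T x0 + E * \<beta> ^ k" using Gk[of k] S_prob[of k] E0 by (intro add_mono mult_left_mono) auto
    finally show ?thesis .
  qed
  show ?thesis by (rule limit_arg[OF bound E0 beta_nonneg beta])
qed

end

context problem
begin

lemma bm_add_const: "bm u \<Longrightarrow> bm (\<lambda>s x. u s x + \<eta>)"
proof -
  assume u: "bm u"
  then obtain B where B: "\<And>s x. \<bar>u s x\<bar> \<le> B" by (auto simp: bm_def)
  have "(\<lambda>(s, x). u s x + \<eta>) \<in> borel_measurable (borel \<Otimes>\<^sub>M borel)"
    using bm_meas[OF u] by (simp add: case_prod_beta')
  moreover have "\<bar>u s x + \<eta>\<bar> \<le> B + \<bar>\<eta>\<bar>" for s x using B[of s x] by linarith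
  ultimately show ?thesis unfolding bm_def by blast
qed

lemma contf_add_const:
  assumes u: "bm u"
  shows "contf (\<lambda>s x. u s x + \<eta>) s x = contf u s x + \<eta> * Qk K s UNIV x"
proof -
  interpret prob_space "K x" by (rule Kp)
  have ii: "integrable (K x) (\<lambda>p. indicator ({0..s} \<times> UNIV) p * \<eta>)"
    using Icc_UNIV_sets[of s] by (intro integrable_mult_left integrable_real_indicator) (auto simp: Ks emeasure_eq_measure)
  have "(\<integral>p. indicator ({0..s} \<times> UNIV) p * (u (s - fst p) (snd p) + \<eta>) \<partial>K x)
      = (\<integral>p. indicator ({0..s} \<times> UNIV) p * u (s - fst p) (snd p) + indicator ({0..s} \<times> UNIV) p * \<eta> \<partial>K x)"
    by (simp add: distrib_left)
  also have "\<dots> = (\<integral>p. indicator ({0..s} \<times> UNIV) p * u (s - fst p) (snd p) \<partial>K x) + \<eta> * Qk K s UNIV x"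
    using Bochner_Integration.integral_add[OF bm_integrable[OF u] ii] Qk_integral[where s=s and D=\<eta> and x=x] by simp
  finally show ?thesis unfolding contf_def by simp
qed

lemma V_diff_N:
  assumes "N \<le> m" "0 \<le> s" "s \<le> T"
  shows "\<bar>V m s x - V N s x\<bar> \<le> \<beta> ^ N * Bg / (1 - \<beta>)"
proof -
  have "\<bar>V m s x - V N s x\<bar> \<le> (\<Sum>j\<in>{N..<m}. \<beta> ^ j * Bg)"
    using assms(1)
  proof (induct m rule: dec_induct)
    case base then show ?case by simp
  next
    case (step m)
    have "\<bar>V (Suc m) s x - V N s x\<bar> \<le> \<bar>V (Suc m) s x - V m s x\<bar> + \<bar>V m s x - V N s x\<bar>" by linarith
    also have "\<dots> \<le> \<beta> ^ m * Bg + (\<Sum>j\<in>{N..<m}. \<beta> ^ j * Bg)"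
      using V_diff_Suc[OF assms(2,3), of m x] step(3) by linarith
    finally show ?case using step(1) by (simp add: add.commute)
  qed
  also have "\<dots> = \<beta> ^ N * Bg * (\<Sum>j<m - N. \<beta> ^ j)"
  proof -
    have "(\<Sum>j\<in>{N..<m}. \<beta> ^ j * Bg) = (\<Sum>j<m - N. \<beta> ^ (N + j) * Bg)"
      using assms(1) by (intro sum.reindex_bij_witness[where i="\<lambda>j. N + j" and j="\<lambda>j. j - N"]) auto
    then show ?thesis by (simp add: power_add sum_distrib_left mult_ac)
  qed
  also have "\<dots> \<le> \<beta> ^ N * Bg * (1 / (1 - \<beta>))"
  proof (rule mult_left_mono)
    have "(\<Sum>j<m - N. \<beta> ^ j) = (1 - \<beta> ^ (m - N)) / (1 - \<beta>)"
      using beta by (simp add: sum_gp_strict)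
    also have "\<dots> \<le> 1 / (1 - \<beta>)" using beta beta_nonneg by (simp add: divide_right_mono)
    finally show "(\<Sum>j<m - N. \<beta> ^ j) \<le> 1 / (1 - \<beta>)" .
    show "0 \<le> \<beta> ^ N * Bg" using beta_nonneg Bg_nonneg by simp
  qed
  finally show ?thesis by simp
qed

lemma Gop_V: "Gop K c g (V N) = V (Suc N)"
  by (simp add: Vn_def)

lemma Deps_alt: "Deps K c g T \<epsilon> = {p. 0 < fst p \<and> fst p \<le> T \<and> g (snd p) = V (Suc (Neps K c g T \<epsilon>)) (fst p) (snd p)}"
  by (auto simp: Deps_def Gop_V)

lemma Deps_sets: "Deps K c g T \<epsilon> \<in> sets (borel :: (real \<times> 'e) measure)"
proof -
  let ?N = "Suc (Neps K c g T \<epsilon>)"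
  have [measurable]: "(\<lambda>p. V ?N (fst p) (snd p)) \<in> borel_measurable (borel \<Otimes>\<^sub>M borel)"
    using bm_meas[OF bm_V[of ?N]] by (simp add: case_prod_beta')
  have "{p \<in> space (borel \<Otimes>\<^sub>M borel). 0 < fst p \<and> fst p \<le> T \<and> g (snd p) = V ?N (fst p) (snd p)} \<in> sets (borel \<Otimes>\<^sub>M borel)"
    by measurable
  then have "Deps K c g T \<epsilon> \<in> sets ((borel :: real measure) \<Otimes>\<^sub>M (borel :: 'e measure))"
    by (simp add: Deps_alt space_pair_measure)
  then show ?thesis by (metis borel_prod)
qed

lemma tau_char:
  "tau_eps K c g T \<epsilon> \<omega> = enat n \<longleftrightarrow>
     (\<forall>j\<in>{..<n}. (T - Sn \<omega> j, Xn \<omega> j) \<notin> Deps K c g T \<epsilon> \<and> Sn \<omega> j < T) \<and>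
     ((T - Sn \<omega> n, Xn \<omega> n) \<in> Deps K c g T \<epsilon> \<or> T \<le> Sn \<omega> n)"
proof -
  define B1 where "B1 = {n. (T - Sn \<omega> n, Xn \<omega> n) \<in> Deps K c g T \<epsilon>}"
  define B2 where "B2 = {n. T \<le> Sn \<omega> n}"
  have tau: "tau_eps K c g T \<epsilon> \<omega> = min (Inf (enat ` B1)) (Inf (enat ` B2))"
    by (simp add: tau_eps_def B1_def B2_def)
  show ?thesis
  proof
    assume a: "tau_eps K c g T \<epsilon> \<omega> = enat n"
    have lt: "j \<notin> B1 \<and> j \<notin> B2" if "j < n" for j
    proof -
      have "enat j < min (Inf (enat ` B1)) (Inf (enat ` B2))" using a that tau by simp
      then have "enat j < Inf (enat ` B1)" "enat j < Inf (enat ` B2)" by auto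
      then show ?thesis using Inf_lower[of "enat j" "enat ` B1"] Inf_lower[of "enat j" "enat ` B2"] by auto
    qed
    have "Inf (enat ` B1) = enat n \<or> Inf (enat ` B2) = enat n" using a tau by (auto simp: min_def split: if_splits)
    then have "n \<in> B1 \<or> n \<in> B2" using Inf_enat_mem by blast
    then show "(\<forall>j\<in>{..<n}. (T - Sn \<omega> j, Xn \<omega> j) \<notin> Deps K c g T \<epsilon> \<and> Sn \<omega> j < T) \<and>
        ((T - Sn \<omega> n, Xn \<omega> n) \<in> Deps K c g T \<epsilon> \<or> T \<le> Sn \<omega> n)"
      using lt by (auto simp: B1_def B2_def not_le)
  next
    assume a: "(\<forall>j\<in>{..<n}. (T - Sn \<omega> j, Xn \<omega> j) \<notin> Deps K c g T \<epsilon> \<and> Sn \<omega> j < T) \<and>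
        ((T - Sn \<omega> n, Xn \<omega> n) \<in> Deps K c g T \<epsilon> \<or> T \<le> Sn \<omega> n)"
    have g1: "enat n \<le> Inf (enat ` B1)"
      by (rule Inf_greatest) (use a in \<open>auto simp: B1_def not_less[symmetric]\<close>)
    have g2: "enat n \<le> Inf (enat ` B2)"
      by (rule Inf_greatest) (use a in \<open>auto simp: B2_def not_less[symmetric]\<close>)
    have "n \<in> B1 \<or> n \<in> B2" using a by (auto simp: B1_def B2_def)
    then have "Inf (enat ` B1) \<le> enat n \<or> Inf (enat ` B2) \<le> enat n" by (auto intro: Inf_lower)
    then show "tau_eps K c g T \<epsilon> \<omega> = enat n" using g1 g2 tau by (auto simp: min_def)
  qed
qed

lemma tau_st: "is_stopping_time (tau_eps K c g T \<epsilon>)"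
  unfolding is_stopping_time_def
proof
  fix n
  let ?D = "Deps K c g T \<epsilon>"
  define A where "A = {y \<in> space (Ysp n). (\<forall>j\<in>{..<n}. (T - yS j y, yX j y) \<notin> ?D \<and> yS j y < T) \<and>
                         ((T - yS n y, yX n y) \<in> ?D \<or> T \<le> yS n y)}"
  have Dm: "?D \<in> sets ((borel :: real measure) \<Otimes>\<^sub>M (borel :: 'e measure))"
    using Deps_sets by (metis borel_prod)
  have pm: "(\<lambda>y. (T - yS j y, yX j y)) \<in> Ysp n \<rightarrow>\<^sub>M borel \<Otimes>\<^sub>M borel" if "j \<le> n" for j
    using that by measurable
  have A: "A \<in> sets (Ysp n)"
  proof -
    have [measurable]: "Measurable.pred (Ysp n) (\<lambda>y. (T - yS j y, yX j y) \<in> ?D)" if "j \<le> n" for j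
      by (rule pred_sets2[OF Dm pm[OF that]])
    have [measurable]: "Measurable.pred (Ysp n) (\<lambda>y. yS j y < T)" if "j \<le> n" for j
      using that by measurable
    show ?thesis unfolding A_def by measurable
  qed
  have "{\<omega> \<in> space Omega. tau_eps K c g T \<epsilon> \<omega> = enat n} = Yn n -` A \<inter> space Omega"
    using measurable_space[OF meas_Yn]
    by (auto simp: tau_char A_def Sn_Y[of _ n] Xn_Y[of _ n])
  then show "{\<omega> \<in> space Omega. tau_eps K c g T \<epsilon> \<omega> = enat n} \<in> sets (Fn n)"
    using A unfolding sets_Fn by blast
qed

end

context problem
begin

lemma eta_bound:
  assumes eps: "0 < \<epsilon>"
  shows "\<beta> ^ Suc (Neps K c g T \<epsilon>) * Bg / (1 - \<beta>) \<le> \<epsilon>"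
proof -
  let ?N = "Neps K c g T \<epsilon>"
  define M where "M = T * Bc + Bg"
  have M0: "Bg \<le> M" using T Bc_nonneg by (simp add: M_def)
  have b1: "0 < 1 - \<beta>" using beta by simp
  show ?thesis
  proof (cases "\<beta> = 0")
    case True then show ?thesis using eps by simp
  next
    case False
    then have bp: "0 < \<beta>" using beta_nonneg by simp
    define q where "q = (ln (\<epsilon> * (1 - \<beta>)) - ln (M + 1)) / ln \<beta>"
    have N: "?N = nat \<lceil>q\<rceil>" using False by (simp add: Neps_def Let_def q_def M_def)
    have qN: "q \<le> real ?N" unfolding N by linarith
    have lnb: "ln \<beta> < 0" using bp beta by simp
    have "\<beta> ^ ?N = exp (real ?N * ln \<beta>)" using bp by (simp add: exp_of_nat_mult)
    also have "\<dots> \<le> exp (q * ln \<beta>)" using qN lnb by (subst exp_le_cancel_iff) (intro mult_right_mono_neg, auto)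
    also have "q * ln \<beta> = ln (\<epsilon> * (1 - \<beta>)) - ln (M + 1)" using lnb by (simp add: q_def)
    also have "exp \<dots> = \<epsilon> * (1 - \<beta>) / (M + 1)"
      using eps b1 M0 Bg_nonneg by (simp add: exp_diff)
    finally have bN: "\<beta> ^ ?N \<le> \<epsilon> * (1 - \<beta>) / (M + 1)" .
    have "\<beta> ^ Suc ?N * Bg / (1 - \<beta>) = \<beta> * Bg * (\<beta> ^ ?N / (1 - \<beta>))" by (simp add: field_simps)
    also have "\<dots> \<le> \<beta> * Bg * (\<epsilon> / (M + 1))"
    proof (rule mult_left_mono)
      show "\<beta> ^ ?N / (1 - \<beta>) \<le> \<epsilon> / (M + 1)" using bN b1 by (simp add: field_simps)
      show "0 \<le> \<beta> * Bg" using bp Bg_nonneg by simp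
    qed
    also have "\<dots> \<le> 1 * (M + 1) * (\<epsilon> / (M + 1))"
      using beta bp Bg_nonneg M0 eps by (intro mult_right_mono mult_mono) auto
    also have "\<dots> = \<epsilon>" using M0 Bg_nonneg by simp
    finally show ?thesis .
  qed
qed

lemma D2_a:
  assumes s: "0 \<le> s" "s \<le> T" and ne: "g y \<noteq> V (Suc N) s y"
  defines "\<eta> \<equiv> \<beta> ^ Suc N * Bg / (1 - \<beta>)"
  shows "contf (\<lambda>s y. V (Suc N) s y + \<eta>) s y \<le> V (Suc N) s y + \<eta>"
proof -
  have b1: "0 < 1 - \<beta>" using beta by simp
  have eta0: "0 \<le> \<eta>" unfolding \<eta>_def using beta_nonneg Bg_nonneg b1 by simp
  have VS: "V (Suc N) s y = contf (V N) s y" using ne by (simp add: V_Suc min_def split: if_splits)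
  have "contf (\<lambda>s y. V (Suc N) s y + \<eta>) s y = contf (V (Suc N)) s y + \<eta> * Qk K s UNIV y"
    by (rule contf_add_const[OF bm_V])
  also have "\<dots> \<le> contf (V (Suc N)) s y + \<eta> * \<beta>"
    using Qk_le_beta[OF s(2), of y] eta0 by (simp add: mult_left_mono)
  also have "contf (V (Suc N)) s y \<le> contf (V N) s y + \<beta> * (\<beta> ^ N * Bg)"
    using contf_lip[OF bm_V bm_V s, of "Suc N" N "\<beta> ^ N * Bg" y] V_diff_Suc s by auto
  finally have "contf (\<lambda>s y. V (Suc N) s y + \<eta>) s y \<le> V (Suc N) s y + (\<beta> ^ Suc N * Bg + \<eta> * \<beta>)"
    by (simp add: VS)
  also have "\<beta> ^ Suc N * Bg + \<eta> * \<beta> = \<eta>" unfolding \<eta>_def using b1 by (simp add: field_simps)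
  finally show ?thesis .
qed

lemma D2_b:
  assumes n: "Suc N \<le> n" and s: "0 \<le> s" "s \<le> T"
    and gap: "g y - V (Suc N) s y > \<beta> ^ Suc N * Bg / (1 - \<beta>)"
  defines "\<delta> \<equiv> \<beta> ^ n * Bg / (1 - \<beta>)"
  shows "contf (\<lambda>s y. V n s y + \<delta>) s y \<le> V n s y + \<delta>"
proof -
  obtain m where m: "n = Suc m" "N \<le> m" using n by (cases n) auto
  have b1: "0 < 1 - \<beta>" using beta by simp
  have d0: "0 \<le> \<delta>" unfolding \<delta>_def using beta_nonneg Bg_nonneg b1 by simp
  have eta0: "0 \<le> \<beta> ^ Suc N * Bg / (1 - \<beta>)" using beta_nonneg Bg_nonneg b1 by simp
  have VS: "V (Suc N) s y = contf (V N) s y"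
    using gap eta0 by (simp add: V_Suc min_def split: if_splits)
  have "contf (V m) s y \<le> contf (V N) s y + \<beta> * (\<beta> ^ N * Bg / (1 - \<beta>))"
    using contf_lip[OF bm_V bm_V s, of m N "\<beta> ^ N * Bg / (1 - \<beta>)" y] V_diff_N[OF m(2)] s by auto
  also have "\<beta> * (\<beta> ^ N * Bg / (1 - \<beta>)) = \<beta> ^ Suc N * Bg / (1 - \<beta>)" by simp
  finally have "contf (V m) s y < g y" using gap VS by simp
  then have Vn: "V n s y = contf (V m) s y" by (simp add: m V_Suc)
  have c1: "contf (\<lambda>s y. V n s y + \<delta>) s y = contf (V n) s y + \<delta> * Qk K s UNIV y"
    by (rule contf_add_const[OF bm_V])
  have c2: "\<delta> * Qk K s UNIV y \<le> \<delta> * \<beta>"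
    using Qk_le_beta[OF s(2), of y] d0 by (simp add: mult_left_mono)
  have c3: "contf (V n) s y \<le> contf (V m) s y + \<beta> * (\<beta> ^ m * Bg)"
    using contf_lip[OF bm_V bm_V s, of n m "\<beta> ^ m * Bg" y] V_diff_Suc s m(1) by auto
  have c4: "\<beta> * (\<beta> ^ m * Bg) = \<beta> ^ n * Bg" using m(1) by simp
  have "contf (\<lambda>s y. V n s y + \<delta>) s y \<le> V n s y + (\<beta> ^ n * Bg + \<delta> * \<beta>)"
    using c1 c2 c3 c4 Vn by linarith
  also have "\<beta> ^ n * Bg + \<delta> * \<beta> = \<delta>" unfolding \<delta>_def using b1 by (simp add: field_simps)
  finally show ?thesis .
qed

end

theorem theorem4p5:
  fixes K :: "'e::polish_space \<Rightarrow> (real \<times> 'e) measure"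
    and P :: "'e \<Rightarrow> 'e omega measure"
    and c g :: "'e \<Rightarrow> real"
    and T \<epsilon> :: real
  assumes K: "semi_markov_kernel K"
    and P: "\<And>x. path_measure K x (P x)"
    and c_meas: "c \<in> borel_measurable borel" and c_bdd: "bounded (range c)"
    and c_nonneg: "\<And>x. 0 \<le> c x"
    and g_meas: "g \<in> borel_measurable borel" and g_bdd: "bounded (range g)"
    and g_nonneg: "\<And>x. 0 \<le> g x"
    and T: "0 \<le> T"
    and beta: "betaQ K T < 1"
    and eps: "0 < \<epsilon>"
  shows "is_stopping_time (tau_eps K c g T \<epsilon>) \<and>
         (\<forall>x. Vtau P c g (tau_eps K c g T \<epsilon>) T x - Vstar P c g T x \<le> \<epsilon>) \<and>
         ((INF p \<in> ({0<..T} \<times> UNIV) - Deps K c g T \<epsilon>.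
             ereal (g (snd p) - Gop K c g (Vn K c g (Neps K c g T \<epsilon>)) (fst p) (snd p))) > ereal \<epsilon>
          \<longrightarrow> (\<forall>x. Vtau P c g (tau_eps K c g T \<epsilon>) T x = Vstar P c g T x))"
proof -
  interpret pb: problem K c g T
    by unfold_locales (use K c_meas c_bdd c_nonneg g_meas g_bdd g_nonneg T beta in auto)
  have full: "full K c g T x (P x)" for x
    by (intro full.intro pb.problem_axioms setting.intro K P)
  let ?\<tau> = "tau_eps K c g T \<epsilon>"
  let ?N = "Neps K c g T \<epsilon>"
  let ?\<beta> = "betaQ K T"
  let ?Bg = "supnorm g"
  define \<eta> where "\<eta> = ?\<beta> ^ Suc ?N * ?Bg / (1 - ?\<beta>)"
  have b1: "0 < 1 - ?\<beta>" using beta by simp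
  have eta0: "0 \<le> \<eta>" unfolding \<eta>_def using pb.beta_nonneg pb.Bg_nonneg b1 by simp
  have eta_eps: "\<eta> \<le> \<epsilon>" unfolding \<eta>_def by (rule pb.eta_bound[OF eps])
  have st: "is_stopping_time ?\<tau>" by (rule pb.tau_st)
  have Vtau_eq: "Vtau P c g \<sigma> T x = (\<integral>\<omega>. Rcost c g T \<sigma> \<omega> \<partial>P x)" for \<sigma> x
    by (simp add: Vtau_def)
  have Vtau_nonneg: "0 \<le> Vtau P c g \<sigma> T x" for \<sigma> x
  proof -
    interpret fx: full K c g T x "P x" by (rule full)
    show ?thesis unfolding Vtau_eq
      by (rule integral_nonneg_AE, rule AE_I2) (use pb.Rcost_bounds[OF _ T] fx.space_P in auto)
  qed
  have mem: "?\<tau> \<in> {\<tau>. is_stopping_time \<tau>}" using st by (simp only: mem_Collect_eq)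
  have ST_ne: "{\<tau> :: 'e omega \<Rightarrow> enat. is_stopping_time \<tau>} \<noteq> {}"
  proof
    assume e: "{\<tau> :: 'e omega \<Rightarrow> enat. is_stopping_time \<tau>} = {}"
    show False by (rule notE[OF equals0D[OF e] mem])
  qed
  have Vstar_le: "Vstar P c g T x \<le> Vtau P c g \<sigma> T x" if "is_stopping_time \<sigma>" for \<sigma> x
  proof -
    have bdd: "bdd_below ((\<lambda>\<tau>. Vtau P c g \<tau> T x) ` {\<tau> :: 'e omega \<Rightarrow> enat. is_stopping_time \<tau>})"
      by (rule bdd_belowI[where m=0]) (use Vtau_nonneg in blast)
    show ?thesis unfolding Vstar_def by (rule cINF_lower[OF bdd]) (use that in simp)
  qed
  have Vn_le: "pb.V n T x \<le> Vtau P c g \<sigma> T x" if "is_stopping_time \<sigma>" for \<sigma> x n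
  proof -
    interpret fx: full K c g T x "P x" by (rule full)
    show ?thesis unfolding Vtau_eq by (rule fx.lower_bound[OF that])
  qed
  have Vn_le_star: "pb.V n T x \<le> Vstar P c g T x" for n x
    unfolding Vstar_def by (rule cINF_greatest[OF ST_ne]) (use Vn_le in auto)
  have partA: "Vtau P c g ?\<tau> T x - Vstar P c g T x \<le> \<epsilon>" for x
  proof -
    interpret fx: full K c g T x "P x" by (rule full)
    let ?U = "\<lambda>s y. pb.V (Suc ?N) s y + \<eta>"
    have "Vtau P c g ?\<tau> T x \<le> ?U T x"
      unfolding Vtau_eq
    proof (rule fx.upper_bound[OF st pb.bm_add_const[OF pb.bm_V]])
      show "0 \<le> ?U s y" for s y using pb.V_nonneg eta0 by (simp add: add_nonneg_nonneg)
      show "?U s y \<le> ?Bg + \<eta>" for s y using pb.V_le_Bg by simp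
      show "g y \<le> ?U s y" if "0 < s" "s \<le> T" "(s, y) \<in> Deps K c g T \<epsilon>" for s y
        using that eta0 by (simp add: pb.Deps_alt)
      show "pb.contf ?U s y \<le> ?U s y" if "0 < s" "s \<le> T" "(s, y) \<notin> Deps K c g T \<epsilon>" for s y
        unfolding \<eta>_def by (rule pb.D2_a) (use that in \<open>auto simp: pb.Deps_alt\<close>)
    qed
    then show ?thesis using Vn_le_star[of "Suc ?N" x] eta_eps by simp
  qed
  have partB: "Vtau P c g ?\<tau> T x = Vstar P c g T x"
    if H: "(INF p \<in> ({0<..T} \<times> UNIV) - Deps K c g T \<epsilon>.
             ereal (g (snd p) - Gop K c g (Vn K c g ?N) (fst p) (snd p))) > ereal \<epsilon>" for x
  proof -
    interpret fx: full K c g T x "P x" by (rule full)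
    have gap: "g y - pb.V (Suc ?N) s y > \<eta>" if "0 < s" "s \<le> T" "(s, y) \<notin> Deps K c g T \<epsilon>" for s y
    proof -
      have "(s, y) \<in> ({0<..T} \<times> UNIV) - Deps K c g T \<epsilon>" using that by auto
      then have "(INF p \<in> ({0<..T} \<times> UNIV) - Deps K c g T \<epsilon>.
             ereal (g (snd p) - Gop K c g (Vn K c g ?N) (fst p) (snd p))) \<le> ereal (g y - Gop K c g (Vn K c g ?N) s y)"
        by (rule INF_lower2) simp
      with H have "ereal \<epsilon> < ereal (g y - Gop K c g (Vn K c g ?N) s y)" by (rule less_le_trans)
      then have "ereal \<epsilon> < ereal (g y - pb.V (Suc ?N) s y)" by (simp only: pb.Gop_V)
      then show ?thesis using eta_eps by simp
    qed
    have bnd: "Vtau P c g ?\<tau> T x \<le> pb.V n T x + ?\<beta> ^ n * ?Bg / (1 - ?\<beta>)" if n: "Suc ?N \<le> n" for n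
    proof -
      let ?U = "\<lambda>s y. pb.V n s y + ?\<beta> ^ n * ?Bg / (1 - ?\<beta>)"
      have d0: "0 \<le> ?\<beta> ^ n * ?Bg / (1 - ?\<beta>)" using pb.beta_nonneg pb.Bg_nonneg b1 by simp
      show ?thesis unfolding Vtau_eq
      proof (rule fx.upper_bound[OF st pb.bm_add_const[OF pb.bm_V]])
        show "0 \<le> ?U s y" for s y using pb.V_nonneg d0 by (simp add: add_nonneg_nonneg)
        show "?U s y \<le> ?Bg + ?\<beta> ^ n * ?Bg / (1 - ?\<beta>)" for s y using pb.V_le_Bg by simp
        show "g y \<le> ?U s y" if "0 < s" "s \<le> T" "(s, y) \<in> Deps K c g T \<epsilon>" for s y
        proof -
          have "g y = pb.V (Suc ?N) s y" using that by (simp add: pb.Deps_alt)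
          also have "\<dots> \<le> pb.V n s y" by (rule pb.V_mono[OF n])
          finally show ?thesis using d0 by simp
        qed
        show "pb.contf ?U s y \<le> ?U s y" if "0 < s" "s \<le> T" "(s, y) \<notin> Deps K c g T \<epsilon>" for s y
          by (rule pb.D2_b[OF n]) (use that gap[OF that] in \<open>auto simp: \<eta>_def\<close>)
      qed
    qed
    have le_all: "Vtau P c g ?\<tau> T x \<le> Vtau P c g \<sigma> T x" if \<sigma>: "is_stopping_time \<sigma>" for \<sigma>
    proof (rule fx.limit_arg)
      fix k
      have "Vtau P c g ?\<tau> T x \<le> pb.V (Suc ?N + k) T x + ?\<beta> ^ (Suc ?N + k) * ?Bg / (1 - ?\<beta>)"
        by (rule bnd) simp
      also have "\<dots> \<le> Vtau P c g \<sigma> T x + (?\<beta> ^ Suc ?N * ?Bg / (1 - ?\<beta>)) * ?\<beta> ^ k"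
        using Vn_le[OF \<sigma>, where x=x and n="Suc ?N + k"] by (simp add: power_add field_simps)
      finally show "Vtau P c g ?\<tau> T x \<le> Vtau P c g \<sigma> T x + (?\<beta> ^ Suc ?N * ?Bg / (1 - ?\<beta>)) * ?\<beta> ^ k" .
    qed (use eta0 pb.beta_nonneg beta in \<open>auto simp: \<eta>_def\<close>)
    have "Vtau P c g ?\<tau> T x \<le> Vstar P c g T x"
      unfolding Vstar_def by (rule cINF_greatest[OF ST_ne]) (use le_all in auto)
    then show ?thesis using Vstar_le[OF st, of x] by simp
  qed
  show ?thesis
  proof (intro conjI allI impI)
    show "is_stopping_time ?\<tau>" by (rule st)
    show "Vtau P c g ?\<tau> T x - Vstar P c g T x \<le> \<epsilon>" for x by (rule partA)
    show "Vtau P c g ?\<tau> T x = Vstar P c g T x"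
      if "(INF p \<in> ({0<..T} \<times> UNIV) - Deps K c g T \<epsilon>.
             ereal (g (snd p) - Gop K c g (Vn K c g ?N) (fst p) (snd p))) > ereal \<epsilon>" for x
      by (rule partB[OF that])
  qed
qed

end
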